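(* For each $n\in\mathbf{N}$ let $W_n = (w_{ij}^{(n)})_{i,j=1}^n$ be a random $n\times n$ Hermitian matrix whose upper triangular entries are jointly independent with mean zero, and assume: there are $\eta_n>0$ with $\eta_n\to0$ and $|w_{ij}^{(n)}|\le\eta_n$ for all $n,i,j$; there is a finite $C\ge0$ with $\sum_{j=1}^n \operatorname{Var}[w_{ij}^{(n)}]\le C$ for all $n$ and $i$; and \[ \lim_{n\to\infty} \frac{1}{n}\sum_{i=1}^n \biggl| \sum_{j=1}^n \Bigl( \operatorname{Var}\bigl[w_{ij}^{(n)}\bigr] - \frac{1}{n} \Bigr) \biggr| = 0. \] Fix $k\in\mathbf{N}$, let $t \in \mathbf{N}$ and $\mathbf{c} = (c_0,\ldots,c_k) \in \Gamma(k,t)$, and assume that $\mathbf{c}$ does not walk on any edge exactly once, i.e. for each $s \in\{1,\ldots,k\}$ there is $r \in \{1,\ldots,k\}$ with $r \ne s$ and $\{c_{s-1},c_s\} = \{c_{r-1},c_r\}$. Then $t \le k/2+1$, and: (i) if $t < k/2 + 1$, then $\displaystyle\lim_{n\to\infty}\frac1n \sum_{(i_0,\ldots,i_k) \in L(n,\mathbf{c})} \mathbf{E} \biggl[\prod_{s=1}^k w_{i_{s-1}i_s}^{(n)} \biggr] = 0$; (ii) if $t = k/2 + 1$, then $\displaystyle\lim_{n\to\infty} \frac{1}{n}\sum_{(i_0,\ldots,i_k) \in L(n,\mathbf{c})} \mathbf{E} \biggl[\prod_{s=1}^k w_{i_{s-1}i_s}^{(n)} \biggr] = 1$.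
   Context: A closed walk of length $k$ is a tuple $(i_0,\ldots,i_k)$ with $i_0=i_k$. Two closed walks $(i_0,\dots,i_k)$ and $(j_0,\dots,j_k)$ are isomorphic if for all $s,r\in\{0,\dots,k\}$, $i_s=i_r$ iff $j_s=j_r$. $\Gamma(k,t)$ is the set of canonical closed walks of length $k$ on $t$ vertices: closed walks $\mathbf{c}=(c_0,\ldots,c_k)$ with $\{c_0,\dots,c_k\}=\{1,\ldots,t\}$, $c_0=c_k=1$, and $c_s\le\max\{c_0,\ldots,c_{s-1}\}+1$ for each $s=1,\ldots,k$. $L(n,\mathbf{c})$ is the set of closed walks $(i_0,\ldots,i_k)$ with entries in $\{1,\ldots,n\}$ isomorphic to $\mathbf{c}$. $\operatorname{Var}[w]=\mathbf{E}|w-\mathbf{E}w|^2$. *)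

theory Defs
  imports "HOL-Probability.Probability"
begin

definition cvar :: "'a measure \<Rightarrow> ('a \<Rightarrow> complex) \<Rightarrow> real" where
  "cvar M X = integral\<^sup>L M (\<lambda>x. (cmod (X x - integral\<^sup>L M X))\<^sup>2)"

definition closed_walk :: "nat \<Rightarrow> nat list \<Rightarrow> bool" where
  "closed_walk k c \<longleftrightarrow> length c = Suc k \<and> c ! 0 = c ! k"

definition walk_iso :: "nat list \<Rightarrow> nat list \<Rightarrow> bool" where
  "walk_iso i j \<longleftrightarrow> length i = length j \<and>
     (\<forall>s < length i. \<forall>r < length i. (i ! s = i ! r) \<longleftrightarrow> (j ! s = j ! r))"

definition Gamma :: "nat \<Rightarrow> nat \<Rightarrow> nat list set" where
  "Gamma k t = {c. closed_walk k c \<and> set c = {1..t} \<and> c ! 0 = 1 \<and> c ! k = 1 \<and>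
      (\<forall>s\<in>{1..k}. c ! s \<le> Max ((\<lambda>r. c ! r) ` {0..<s}) + 1)}"

definition Lwalks :: "nat \<Rightarrow> nat \<Rightarrow> nat list \<Rightarrow> nat list set" where
  "Lwalks n k c = {i. closed_walk k i \<and> set i \<subseteq> {1..n} \<and> walk_iso i c}"

end

theory Submission
  imports Defs
begin

lemma sum_PiE_insert:
  fixes F :: "(nat \<Rightarrow> nat) \<Rightarrow> real"
  assumes "a \<notin> A" "finite A" "\<And>i. finite (B i)"
  shows "(\<Sum>\<phi>\<in>PiE (insert a A) B. F \<phi>) = (\<Sum>\<phi>\<in>PiE A B. \<Sum>y\<in>B a. F (\<phi>(a:=y)))"
proof -
  have "(\<Sum>\<phi>\<in>PiE (insert a A) B. F \<phi>) = (\<Sum>p\<in>B a \<times> PiE A B. F ((\<lambda>(y, g). g(a := y)) p))"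
    unfolding PiE_insert_eq by (subst sum.reindex[OF inj_combinator[OF assms(1)]]) (simp add: comp_def)
  also have "\<dots> = (\<Sum>y\<in>B a. \<Sum>\<phi>\<in>PiE A B. F (\<phi>(a:=y)))"
    using sum.cartesian_product[of "\<lambda>y \<phi>. F (\<phi>(a:=y))" "PiE A B" "B a"]
    by (simp add: case_prod_unfold)
  also have "\<dots> = (\<Sum>\<phi>\<in>PiE A B. \<Sum>y\<in>B a. F (\<phi>(a:=y)))"
    by (rule sum.swap)
  finally show ?thesis .
qed

lemma tree_sum_step:
  fixes K :: "nat \<Rightarrow> nat \<Rightarrow> nat \<Rightarrow> real" and par :: "nat \<Rightarrow> nat" and G :: "nat \<Rightarrow> nat \<Rightarrow> real"
  assumes par: "\<And>v. v \<in> {2..Suc m} \<Longrightarrow> 1 \<le> par v \<and> par v < v" and m: "m \<ge> 1"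
  shows "(\<Sum>\<phi>\<in>PiE {1..Suc m} (\<lambda>_. {1..n}). (\<Prod>v\<in>{2..Suc m}. K v (\<phi> (par v)) (\<phi> v)) * G (\<phi> (Suc m)) (\<phi> u))
    = (\<Sum>\<phi>\<in>PiE {1..m} (\<lambda>_. {1..n}). (\<Prod>v\<in>{2..m}. K v (\<phi> (par v)) (\<phi> v)) *
          (\<Sum>y=1..n. K (Suc m) (\<phi> (par (Suc m))) y * G y ((\<phi>(Suc m := y)) u)))"
proof -
  have e1: "{1..Suc m} = insert (Suc m) {1..m}" by auto
  have e2: "{2..Suc m} = insert (Suc m) {2..m}" using m by auto
  have "(\<Sum>\<phi>\<in>PiE {1..Suc m} (\<lambda>_. {1..n}). (\<Prod>v\<in>{2..Suc m}. K v (\<phi> (par v)) (\<phi> v)) * G (\<phi> (Suc m)) (\<phi> u))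
    = (\<Sum>\<phi>\<in>PiE {1..m} (\<lambda>_. {1..n}). \<Sum>y\<in>{1..n}.
         (\<Prod>v\<in>{2..Suc m}. K v ((\<phi>(Suc m:=y)) (par v)) ((\<phi>(Suc m:=y)) v)) * G y ((\<phi>(Suc m := y)) u))"
    unfolding e1 by (subst sum_PiE_insert) auto
  also have "\<dots> = (\<Sum>\<phi>\<in>PiE {1..m} (\<lambda>_. {1..n}). \<Sum>y\<in>{1..n}.
         (\<Prod>v\<in>{2..m}. K v (\<phi> (par v)) (\<phi> v)) * (K (Suc m) (\<phi> (par (Suc m))) y * G y ((\<phi>(Suc m := y)) u)))"
  proof (intro sum.cong refl)
    fix \<phi> y
    have "(\<Prod>v\<in>{2..m}. K v ((\<phi>(Suc m:=y)) (par v)) ((\<phi>(Suc m:=y)) v)) = (\<Prod>v\<in>{2..m}. K v (\<phi> (par v)) (\<phi> v))"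
    proof (intro prod.cong refl)
      fix v assume "v \<in> {2..m}"
      then show "K v ((\<phi>(Suc m:=y)) (par v)) ((\<phi>(Suc m:=y)) v) = K v (\<phi> (par v)) (\<phi> v)"
        using par[of v] by auto
    qed
    moreover have "par (Suc m) \<noteq> Suc m" using par[of "Suc m"] m by auto
    ultimately show "(\<Prod>v\<in>{2..Suc m}. K v ((\<phi>(Suc m:=y)) (par v)) ((\<phi>(Suc m:=y)) v)) * G y ((\<phi>(Suc m := y)) u)
      = (\<Prod>v\<in>{2..m}. K v (\<phi> (par v)) (\<phi> v)) * (K (Suc m) (\<phi> (par (Suc m))) y * G y ((\<phi>(Suc m := y)) u))"
      unfolding e2 by (subst prod.insert) auto
  qed
  also have "\<dots> = (\<Sum>\<phi>\<in>PiE {1..m} (\<lambda>_. {1..n}). (\<Prod>v\<in>{2..m}. K v (\<phi> (par v)) (\<phi> v)) *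
          (\<Sum>y=1..n. K (Suc m) (\<phi> (par (Suc m))) y * G y ((\<phi>(Suc m := y)) u)))"
    by (simp add: sum_distrib_left)
  finally show ?thesis .
qed

lemma tree_sum_bound:
  fixes K :: "nat \<Rightarrow> nat \<Rightarrow> nat \<Rightarrow> real" and par :: "nat \<Rightarrow> nat"
  assumes "m \<ge> 1"
    and par: "\<And>v. v \<in> {2..m} \<Longrightarrow> 1 \<le> par v \<and> par v < v"
    and Kpos: "\<And>v x y. K v x y \<ge> 0"
    and row: "\<And>v x. v \<in> {2..m} \<Longrightarrow> x \<in> {1..n} \<Longrightarrow> (\<Sum>y=1..n. K v x y) \<le> D"
    and col: "\<And>v y. v \<in> {2..m} \<Longrightarrow> y \<in> {1..n} \<Longrightarrow> (\<Sum>x=1..n. K v x y) \<le> D"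
    and D: "D \<ge> 0"
    and g: "\<And>j. g j \<ge> 0" and u: "u \<in> {1..m}"
  shows "(\<Sum>\<phi>\<in>PiE {1..m} (\<lambda>_. {1..n}). (\<Prod>v\<in>{2..m}. K v (\<phi> (par v)) (\<phi> v)) * g (\<phi> u))
       \<le> D^(m-1) * (\<Sum>j=1..n. g j)"
proof -
  have main: "\<forall>g u. (\<forall>j. g j \<ge> 0) \<longrightarrow> u \<in> {1..m'} \<longrightarrow>
     (\<Sum>\<phi>\<in>PiE {1..m'} (\<lambda>_. {1..n}). (\<Prod>v\<in>{2..m'}. K v (\<phi> (par v)) (\<phi> v)) * g (\<phi> u))
       \<le> D^(m'-1) * (\<Sum>j=1..n. g j)" if "m' \<le> m" for m'
    using that
  proof (induction m')
    case 0
    then show ?case by simp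
  next
    case (Suc m')
    show ?case
    proof (intro allI impI)
      fix g :: "nat \<Rightarrow> real" and u
      assume g: "\<forall>j. g j \<ge> 0" and u: "u \<in> {1..Suc m'}"
      show "(\<Sum>\<phi>\<in>PiE {1..Suc m'} (\<lambda>_. {1..n}). (\<Prod>v\<in>{2..Suc m'}. K v (\<phi> (par v)) (\<phi> v)) * g (\<phi> u))
       \<le> D^(Suc m'-1) * (\<Sum>j=1..n. g j)"
      proof (cases "m' = 0")
        case True
        then have "u = 1" using u by auto
        have "(\<Sum>\<phi>\<in>PiE {1..Suc m'} (\<lambda>_. {1..n}). (\<Prod>v\<in>{2..Suc m'}. K v (\<phi> (par v)) (\<phi> v)) * g (\<phi> u))
           = (\<Sum>\<phi>\<in>PiE (insert (1::nat) {}) (\<lambda>_. {1..n}). g (\<phi> 1))"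
        proof -
          have "{1..Suc m'} = insert 1 {}" "{2..Suc m'} = {}" using True by auto
          then show ?thesis unfolding \<open>u = 1\<close> by simp
        qed
        also have "\<dots> = (\<Sum>j=1..n. g j)"
          by (subst sum_PiE_insert) auto
        finally show ?thesis using True by simp
      next
        case False
        then have m1: "m' \<ge> 1" by simp
        have parS: "\<And>v. v \<in> {2..Suc m'} \<Longrightarrow> 1 \<le> par v \<and> par v < v" using par Suc.prems by auto
        have pw: "par (Suc m') \<in> {1..m'}" using parS[of "Suc m'"] m1 by auto
        have IH: "\<And>g u. (\<forall>j. g j \<ge> 0) \<Longrightarrow> u \<in> {1..m'} \<Longrightarrow>
            (\<Sum>\<phi>\<in>PiE {1..m'} (\<lambda>_. {1..n}). (\<Prod>v\<in>{2..m'}. K v (\<phi> (par v)) (\<phi> v)) * g (\<phi> u))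
             \<le> D^(m'-1) * (\<Sum>j=1..n. g j)" using Suc by auto
        have rowS: "\<And>x. x \<in> {1..n} \<Longrightarrow> (\<Sum>y=1..n. K (Suc m') x y) \<le> D"
          using row Suc.prems m1 by auto
        have colS: "\<And>y. y \<in> {1..n} \<Longrightarrow> (\<Sum>x=1..n. K (Suc m') x y) \<le> D"
          using col Suc.prems m1 by auto
        have Ppos: "\<And>\<phi>. (\<Prod>v\<in>{2..m'}. K v (\<phi> (par v)) (\<phi> v)) \<ge> 0"
          by (intro prod_nonneg) (auto intro: Kpos)
        have step: "(\<Sum>\<phi>\<in>PiE {1..Suc m'} (\<lambda>_. {1..n}). (\<Prod>v\<in>{2..Suc m'}. K v (\<phi> (par v)) (\<phi> v)) * g (\<phi> u))
          = (\<Sum>\<phi>\<in>PiE {1..m'} (\<lambda>_. {1..n}). (\<Prod>v\<in>{2..m'}. K v (\<phi> (par v)) (\<phi> v)) *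
            (\<Sum>y=1..n. K (Suc m') (\<phi> (par (Suc m'))) y * g ((\<phi>(Suc m' := y)) u)))"
          using tree_sum_step[OF parS m1, where K=K and n=n and G="\<lambda>_ x. g x" and u=u] by simp
        show ?thesis
        proof (cases "u = Suc m'")
          case True
          define g' where "g' x = (\<Sum>y=1..n. K (Suc m') x y * g y)" for x
          have g'pos: "\<forall>j. g' j \<ge> 0" unfolding g'_def using g Kpos by (auto intro!: sum_nonneg)
          have "(\<Sum>\<phi>\<in>PiE {1..Suc m'} (\<lambda>_. {1..n}). (\<Prod>v\<in>{2..Suc m'}. K v (\<phi> (par v)) (\<phi> v)) * g (\<phi> u))
             = (\<Sum>\<phi>\<in>PiE {1..m'} (\<lambda>_. {1..n}). (\<Prod>v\<in>{2..m'}. K v (\<phi> (par v)) (\<phi> v)) * g' (\<phi> (par (Suc m'))))"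
            unfolding step g'_def using True by simp
          also have "\<dots> \<le> D^(m'-1) * (\<Sum>x=1..n. g' x)"
            by (rule IH[OF g'pos pw])
          also have "(\<Sum>x=1..n. g' x) = (\<Sum>y=1..n. g y * (\<Sum>x=1..n. K (Suc m') x y))"
            unfolding g'_def by (subst sum.swap) (simp add: sum_distrib_left mult.commute)
          also have "\<dots> \<le> (\<Sum>y=1..n. g y * D)"
            by (intro sum_mono mult_left_mono colS) (auto simp: g)
          also have "D^(m'-1) * (\<Sum>y=1..n. g y * D) = D^(Suc m' - 1) * (\<Sum>j=1..n. g j)"
            using m1 by (simp add: sum_distrib_right[symmetric] power_eq_if)
          finally show ?thesis using D by (simp add: mult_left_mono)
        next
          case False
          then have uu: "u \<in> {1..m'}" using u by auto
          have "(\<Sum>\<phi>\<in>PiE {1..Suc m'} (\<lambda>_. {1..n}). (\<Prod>v\<in>{2..Suc m'}. K v (\<phi> (par v)) (\<phi> v)) * g (\<phi> u))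
             = (\<Sum>\<phi>\<in>PiE {1..m'} (\<lambda>_. {1..n}). (\<Prod>v\<in>{2..m'}. K v (\<phi> (par v)) (\<phi> v)) * g (\<phi> u) *
                   (\<Sum>y=1..n. K (Suc m') (\<phi> (par (Suc m'))) y))"
            unfolding step using False by (simp add: sum_distrib_left sum_distrib_right mult_ac)
          also have "\<dots> \<le> (\<Sum>\<phi>\<in>PiE {1..m'} (\<lambda>_. {1..n}). (\<Prod>v\<in>{2..m'}. K v (\<phi> (par v)) (\<phi> v)) * g (\<phi> u) * D)"
          proof (intro sum_mono mult_left_mono)
            fix \<phi> assume "\<phi> \<in> PiE {1..m'} (\<lambda>_. {1..n})"
            then have "\<phi> (par (Suc m')) \<in> {1..n}" using pw by (auto simp: PiE_def Pi_def)
            then show "(\<Sum>y=1..n. K (Suc m') (\<phi> (par (Suc m'))) y) \<le> D" by (rule rowS)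
            show "0 \<le> (\<Prod>v\<in>{2..m'}. K v (\<phi> (par v)) (\<phi> v)) * g (\<phi> u)"
              using Ppos g by (simp add: mult_nonneg_nonneg)
          qed
          also have "\<dots> = D * (\<Sum>\<phi>\<in>PiE {1..m'} (\<lambda>_. {1..n}). (\<Prod>v\<in>{2..m'}. K v (\<phi> (par v)) (\<phi> v)) * g (\<phi> u))"
            by (simp add: sum_distrib_left mult_ac)
          also have "\<dots> \<le> D * (D^(m'-1) * (\<Sum>j=1..n. g j))"
            by (intro mult_left_mono IH[OF g uu] D)
          also have "\<dots> = D^(Suc m'-1) * (\<Sum>j=1..n. g j)"
            using m1 by (simp add: power_eq_if)
          finally show ?thesis .
        qed
      qed
    qed
  qed
  show ?thesis using main[of m] g u by auto
qed


lemma sum_UN_le_nonneg: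
  fixes f :: "'a \<Rightarrow> real"
  assumes "finite I" "\<And>i. i \<in> I \<Longrightarrow> finite (A i)" "\<And>x. f x \<ge> 0"
  shows "sum f (\<Union>i\<in>I. A i) \<le> (\<Sum>i\<in>I. sum f (A i))"
  using assms
proof (induction I rule: finite_induct)
  case empty
  then show ?case by simp
next
  case (insert a I)
  have "sum f (\<Union>i\<in>insert a I. A i) = sum f (A a \<union> (\<Union>i\<in>I. A i))" by simp
  also have "\<dots> = sum f (A a) + sum f (\<Union>i\<in>I. A i) - sum f (A a \<inter> (\<Union>i\<in>I. A i))"
    using insert by (subst sum_Un) auto
  also have "\<dots> \<le> sum f (A a) + sum f (\<Union>i\<in>I. A i)"
    using insert by (simp add: sum_nonneg)
  also have "\<dots> \<le> sum f (A a) + (\<Sum>i\<in>I. sum f (A i))"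
    using insert by simp
  finally show ?case using insert by simp
qed

lemma tree_sum_diff:
  fixes K :: "nat \<Rightarrow> nat \<Rightarrow> nat \<Rightarrow> real" and par :: "nat \<Rightarrow> nat"
  assumes m: "m \<ge> 1"
    and par: "\<And>v. v \<in> {2..Suc m} \<Longrightarrow> 1 \<le> par v \<and> par v < v"
    and Kpos: "\<And>v x y. K v x y \<ge> 0"
    and row: "\<And>v x. v \<in> {2..Suc m} \<Longrightarrow> x \<in> {1..n} \<Longrightarrow> (\<Sum>y=1..n. K v x y) \<le> D"
    and col: "\<And>v y. v \<in> {2..Suc m} \<Longrightarrow> y \<in> {1..n} \<Longrightarrow> (\<Sum>x=1..n. K v x y) \<le> D"
    and D: "D \<ge> 0"
  shows "\<bar>(\<Sum>\<phi>\<in>PiE {1..Suc m} (\<lambda>_. {1..n}). (\<Prod>v\<in>{2..Suc m}. K v (\<phi> (par v)) (\<phi> v)))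
          - (\<Sum>\<phi>\<in>PiE {1..m} (\<lambda>_. {1..n}). (\<Prod>v\<in>{2..m}. K v (\<phi> (par v)) (\<phi> v)))\<bar>
       \<le> D^(m-1) * (\<Sum>x=1..n. \<bar>(\<Sum>y=1..n. K (Suc m) x y) - 1\<bar>)"
proof -
  define R where "R x = (\<Sum>y=1..n. K (Suc m) x y)" for x
  have step: "(\<Sum>\<phi>\<in>PiE {1..Suc m} (\<lambda>_. {1..n}). (\<Prod>v\<in>{2..Suc m}. K v (\<phi> (par v)) (\<phi> v)))
     = (\<Sum>\<phi>\<in>PiE {1..m} (\<lambda>_. {1..n}). (\<Prod>v\<in>{2..m}. K v (\<phi> (par v)) (\<phi> v)) * R (\<phi> (par (Suc m))))"
    using tree_sum_step[OF par m, where K=K and n=n and G="\<lambda>_ _. 1" and u=1] by (simp add: R_def)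
  have "(\<Sum>\<phi>\<in>PiE {1..Suc m} (\<lambda>_. {1..n}). (\<Prod>v\<in>{2..Suc m}. K v (\<phi> (par v)) (\<phi> v)))
          - (\<Sum>\<phi>\<in>PiE {1..m} (\<lambda>_. {1..n}). (\<Prod>v\<in>{2..m}. K v (\<phi> (par v)) (\<phi> v)))
      = (\<Sum>\<phi>\<in>PiE {1..m} (\<lambda>_. {1..n}). (\<Prod>v\<in>{2..m}. K v (\<phi> (par v)) (\<phi> v)) * (R (\<phi> (par (Suc m))) - 1))"
    unfolding step by (simp add: sum_subtractf algebra_simps)
  also have "\<bar>\<dots>\<bar> \<le> (\<Sum>\<phi>\<in>PiE {1..m} (\<lambda>_. {1..n}). (\<Prod>v\<in>{2..m}. K v (\<phi> (par v)) (\<phi> v)) * \<bar>R (\<phi> (par (Suc m))) - 1\<bar>)"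
    by (rule order_trans[OF sum_abs]) (simp add: abs_mult prod_nonneg Kpos)
  also have "\<dots> \<le> D^(m-1) * (\<Sum>x=1..n. \<bar>R x - 1\<bar>)"
  proof (rule tree_sum_bound[OF m])
    show "par (Suc m) \<in> {1..m}" using par[of "Suc m"] m by auto
  qed (use par Kpos row col D m in auto)
  finally show ?thesis unfolding R_def .
qed


lemma tree_sum_lim:
  fixes V :: "nat \<Rightarrow> nat \<Rightarrow> nat \<Rightarrow> real" and par :: "nat \<Rightarrow> nat"
  assumes m: "m \<ge> 1"
    and par: "\<And>v. v \<in> {2..m} \<Longrightarrow> 1 \<le> par v \<and> par v < v"
    and Vpos: "\<And>n x y. V n x y \<ge> 0"
    and row: "\<And>n x. x \<in> {1..n} \<Longrightarrow> (\<Sum>y=1..n. V n x y) \<le> D"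
    and col: "\<And>n y. y \<in> {1..n} \<Longrightarrow> (\<Sum>x=1..n. V n x y) \<le> D"
    and D: "D \<ge> 0"
    and lim: "(\<lambda>n. (1 / real n) * (\<Sum>x=1..n. \<bar>(\<Sum>y=1..n. V n x y) - 1\<bar>)) \<longlonglongrightarrow> 0"
  shows "(\<lambda>n. (1 / real n) * (\<Sum>\<phi>\<in>PiE {1..m} (\<lambda>_. {1..n}). (\<Prod>v\<in>{2..m}. V n (\<phi> (par v)) (\<phi> v)))) \<longlonglongrightarrow> 1"
proof -
  have "m' \<ge> 1 \<longrightarrow> (\<lambda>n. (1 / real n) * (\<Sum>\<phi>\<in>PiE {1..m'} (\<lambda>_. {1..n}). (\<Prod>v\<in>{2..m'}. V n (\<phi> (par v)) (\<phi> v)))) \<longlonglongrightarrow> 1"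
    if "m' \<le> m" for m'
    using that
  proof (induction m')
    case 0
    then show ?case by simp
  next
    case (Suc m')
    show ?case
    proof (cases "m' = 0")
      case True
      have "\<forall>\<^sub>F n in sequentially. (1 / real n) * (\<Sum>\<phi>\<in>PiE {1..Suc m'} (\<lambda>_. {1..n}). (\<Prod>v\<in>{2..Suc m'}. V n (\<phi> (par v)) (\<phi> v))) = 1"
      proof (rule eventually_sequentiallyI[of 1])
        fix n :: nat assume "n \<ge> 1"
        have "(\<Sum>\<phi>\<in>PiE {1..Suc m'} (\<lambda>_. {1..n}). (\<Prod>v\<in>{2..Suc m'}. V n (\<phi> (par v)) (\<phi> v))) = real n"
          using True by (simp add: card_PiE)
        then show "(1 / real n) * (\<Sum>\<phi>\<in>PiE {1..Suc m'} (\<lambda>_. {1..n}). (\<Prod>v\<in>{2..Suc m'}. V n (\<phi> (par v)) (\<phi> v))) = 1"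
          using \<open>n \<ge> 1\<close> by simp
      qed
      then show ?thesis by (simp add: tendsto_eventually)
    next
      case False
      then have m1: "m' \<ge> 1" by simp
      have IH: "(\<lambda>n. (1 / real n) * (\<Sum>\<phi>\<in>PiE {1..m'} (\<lambda>_. {1..n}). (\<Prod>v\<in>{2..m'}. V n (\<phi> (par v)) (\<phi> v)))) \<longlonglongrightarrow> 1"
        using Suc m1 by auto
      define d where "d n = (1 / real n) * ((\<Sum>\<phi>\<in>PiE {1..Suc m'} (\<lambda>_. {1..n}). (\<Prod>v\<in>{2..Suc m'}. V n (\<phi> (par v)) (\<phi> v)))
          - (\<Sum>\<phi>\<in>PiE {1..m'} (\<lambda>_. {1..n}). (\<Prod>v\<in>{2..m'}. V n (\<phi> (par v)) (\<phi> v))))" for n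
      have "d \<longlonglongrightarrow> 0"
      proof (rule Lim_null_comparison)
        show "\<forall>\<^sub>F n in sequentially. norm (d n) \<le> D^(m'-1) * ((1 / real n) * (\<Sum>x=1..n. \<bar>(\<Sum>y=1..n. V n x y) - 1\<bar>))"
        proof (intro always_eventually allI)
          fix n
          have "\<bar>(\<Sum>\<phi>\<in>PiE {1..Suc m'} (\<lambda>_. {1..n}). (\<Prod>v\<in>{2..Suc m'}. V n (\<phi> (par v)) (\<phi> v)))
              - (\<Sum>\<phi>\<in>PiE {1..m'} (\<lambda>_. {1..n}). (\<Prod>v\<in>{2..m'}. V n (\<phi> (par v)) (\<phi> v)))\<bar>
            \<le> D^(m'-1) * (\<Sum>x=1..n. \<bar>(\<Sum>y=1..n. V n x y) - 1\<bar>)"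
            by (rule tree_sum_diff[OF m1, where K="\<lambda>_. V n"]) (use par Suc.prems Vpos row col D in auto)
          then show "norm (d n) \<le> D^(m'-1) * ((1 / real n) * (\<Sum>x=1..n. \<bar>(\<Sum>y=1..n. V n x y) - 1\<bar>))"
            unfolding d_def by (simp add: abs_mult divide_right_mono)
        qed
        show "(\<lambda>n. D^(m'-1) * ((1 / real n) * (\<Sum>x=1..n. \<bar>(\<Sum>y=1..n. V n x y) - 1\<bar>))) \<longlonglongrightarrow> 0"
          using tendsto_mult_right_zero[OF lim] by simp
      qed
      from tendsto_add[OF IH this] show ?thesis
        unfolding d_def by (simp add: algebra_simps)
    qed
  qed
  then show ?thesis using m by simp
qed

lemma noninj_pair_bound:
  fixes V :: "nat \<Rightarrow> nat \<Rightarrow> real" and par :: "nat \<Rightarrow> nat"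
  assumes m: "m \<ge> 1"
    and par: "\<And>v. v \<in> {2..m} \<Longrightarrow> 1 \<le> par v \<and> par v < v"
    and Vpos: "\<And>x y. V x y \<ge> 0" and Vle: "\<And>x y. V x y \<le> e"
    and row: "\<And>x. x \<in> {1..n} \<Longrightarrow> (\<Sum>y=1..n. V x y) \<le> D"
    and col: "\<And>y. y \<in> {1..n} \<Longrightarrow> (\<Sum>x=1..n. V x y) \<le> D"
    and D: "D \<ge> 1"
    and ab: "a \<in> {1..m}" "b \<in> {1..m}" "a < b"
  shows "(\<Sum>\<phi>\<in>{\<phi>\<in>PiE {1..m} (\<lambda>_. {1..n}). \<phi> a = \<phi> b}. \<Prod>v\<in>{2..m}. V (\<phi> (par v)) (\<phi> v))
    \<le> e * D^(m-1) * real n"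
proof -
  define K where "K v x y = (if v = b then (if x = y then 1 else 0) else V x y)" for v x y :: nat
  define par' where "par' = par(b := a)"
  have b2: "b \<in> {2..m}" using ab by auto
  have e0: "e \<ge> 0" using Vpos[of 0 0] Vle[of 0 0] by simp
  have Kpos: "\<And>v x y. K v x y \<ge> 0" unfolding K_def using Vpos by auto
  have delta: "(\<Sum>y=1..n. (if x = y then 1 else 0::real)) \<le> D" if "x \<in> {1..n}" for x
    using that D by (simp add: sum.delta)
  have delta': "(\<Sum>y=1..n. (if y = x then 1 else 0::real)) \<le> D" if "x \<in> {1..n}" for x
    using that D by (simp add: sum.delta)
  have Pos: "\<And>\<phi>. (\<Prod>v\<in>{2..m}. K v (\<phi> (par' v)) (\<phi> v)) \<ge> 0" by (intro prod_nonneg) (simp add: Kpos)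
  have bound: "(\<Sum>\<phi>\<in>PiE {1..m} (\<lambda>_. {1..n}). (\<Prod>v\<in>{2..m}. K v (\<phi> (par' v)) (\<phi> v)) * 1) \<le> D^(m-1) * (\<Sum>j=1..n. 1)"
  proof (rule tree_sum_bound[OF m])
    show "\<And>v. v \<in> {2..m} \<Longrightarrow> 1 \<le> par' v \<and> par' v < v" using par ab unfolding par'_def by auto
    show "(\<Sum>y=1..n. K v x y) \<le> D" if "v \<in> {2..m}" "x \<in> {1..n}" for v x
      unfolding K_def using that row delta by (cases "v = b") auto
    show "(\<Sum>x=1..n. K v x y) \<le> D" if "v \<in> {2..m}" "y \<in> {1..n}" for v y
      unfolding K_def using that col delta' by (cases "v = b") auto
  qed (use Kpos D ab in auto)
  have pt: "(\<Prod>v\<in>{2..m}. V (\<phi> (par v)) (\<phi> v)) \<le> e * (\<Prod>v\<in>{2..m}. K v (\<phi> (par' v)) (\<phi> v))"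
    if "\<phi> a = \<phi> b" for \<phi>
  proof -
    have "(\<Prod>v\<in>{2..m}. V (\<phi> (par v)) (\<phi> v)) = V (\<phi> (par b)) (\<phi> b) * (\<Prod>v\<in>{2..m}-{b}. V (\<phi> (par v)) (\<phi> v))"
      using b2 by (subst prod.remove) auto
    also have "\<dots> \<le> e * (\<Prod>v\<in>{2..m}-{b}. V (\<phi> (par v)) (\<phi> v))"
      by (intro mult_right_mono Vle prod_nonneg Vpos)
    also have "(\<Prod>v\<in>{2..m}-{b}. V (\<phi> (par v)) (\<phi> v)) = (\<Prod>v\<in>{2..m}-{b}. K v (\<phi> (par' v)) (\<phi> v))"
      unfolding K_def par'_def by (intro prod.cong) auto
    also have "\<dots> = K b (\<phi> (par' b)) (\<phi> b) * (\<Prod>v\<in>{2..m}-{b}. K v (\<phi> (par' v)) (\<phi> v))"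
      using that unfolding K_def par'_def by simp
    also have "\<dots> = (\<Prod>v\<in>{2..m}. K v (\<phi> (par' v)) (\<phi> v))"
      using b2 by (subst prod.remove[of _ b]) auto
    finally show ?thesis .
  qed
  have "(\<Sum>\<phi>\<in>{\<phi>\<in>PiE {1..m} (\<lambda>_. {1..n}). \<phi> a = \<phi> b}. \<Prod>v\<in>{2..m}. V (\<phi> (par v)) (\<phi> v))
      \<le> (\<Sum>\<phi>\<in>{\<phi>\<in>PiE {1..m} (\<lambda>_. {1..n}). \<phi> a = \<phi> b}. e * (\<Prod>v\<in>{2..m}. K v (\<phi> (par' v)) (\<phi> v)))"
    by (intro sum_mono pt) auto
  also have "\<dots> \<le> (\<Sum>\<phi>\<in>PiE {1..m} (\<lambda>_. {1..n}). e * (\<Prod>v\<in>{2..m}. K v (\<phi> (par' v)) (\<phi> v)))"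
    by (intro sum_mono2) (auto simp: finite_PiE e0 Pos)
  also have "\<dots> = e * (\<Sum>\<phi>\<in>PiE {1..m} (\<lambda>_. {1..n}). (\<Prod>v\<in>{2..m}. K v (\<phi> (par' v)) (\<phi> v)) * 1)"
    by (simp add: sum_distrib_left)
  also have "\<dots> \<le> e * (D^(m-1) * (\<Sum>j=1..n. 1))"
    by (intro mult_left_mono bound e0)
  finally show ?thesis by simp
qed

lemma noninj_bound:
  fixes V :: "nat \<Rightarrow> nat \<Rightarrow> real" and par :: "nat \<Rightarrow> nat"
  assumes m: "m \<ge> 1"
    and par: "\<And>v. v \<in> {2..m} \<Longrightarrow> 1 \<le> par v \<and> par v < v"
    and Vpos: "\<And>x y. V x y \<ge> 0" and Vle: "\<And>x y. V x y \<le> e"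
    and row: "\<And>x. x \<in> {1..n} \<Longrightarrow> (\<Sum>y=1..n. V x y) \<le> D"
    and col: "\<And>y. y \<in> {1..n} \<Longrightarrow> (\<Sum>x=1..n. V x y) \<le> D"
    and D: "D \<ge> 1"
  shows "(\<Sum>\<phi>\<in>{\<phi>\<in>PiE {1..m} (\<lambda>_. {1..n}). \<not> inj_on \<phi> {1..m}}. \<Prod>v\<in>{2..m}. V (\<phi> (par v)) (\<phi> v))
    \<le> real (m*m) * (e * D^(m-1) * real n)"
proof -
  define Pairs where "Pairs = {p \<in> {1..m} \<times> {1..m}. fst p < snd p}"
  define S where "S p = {\<phi>\<in>PiE {1..m} (\<lambda>_. {1..n}). \<phi> (fst p) = \<phi> (snd p)}" for p :: "nat \<times> nat"
  define F where "F \<phi> = (\<Prod>v\<in>{2..m}. V (\<phi> (par v)) (\<phi> v))" for \<phi> :: "nat \<Rightarrow> nat"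
  have Fpos: "\<And>\<phi>. F \<phi> \<ge> 0" unfolding F_def by (intro prod_nonneg) (simp add: Vpos)
  have finP: "finite Pairs" unfolding Pairs_def by (rule finite_subset[of _ "{1..m} \<times> {1..m}"]) auto
  have cardP: "card Pairs \<le> m * m"
    using card_mono[of "{1..m} \<times> {1..m}" Pairs] unfolding Pairs_def by (auto simp: card_cartesian_product)
  have sub: "{\<phi>\<in>PiE {1..m} (\<lambda>_. {1..n}). \<not> inj_on \<phi> {1..m}} \<subseteq> (\<Union>p\<in>Pairs. S p)"
  proof
    fix \<phi> assume "\<phi> \<in> {\<phi>\<in>PiE {1..m} (\<lambda>_. {1..n}). \<not> inj_on \<phi> {1..m}}"
    then obtain x y where xy: "x \<in> {1..m}" "y \<in> {1..m}" "x \<noteq> y" "\<phi> x = \<phi> y" "\<phi> \<in> PiE {1..m} (\<lambda>_. {1..n})"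
      unfolding inj_on_def by auto
    show "\<phi> \<in> (\<Union>p\<in>Pairs. S p)"
    proof (cases "x < y")
      case True
      then show ?thesis using xy unfolding Pairs_def S_def by (intro UN_I[of "(x,y)"]) auto
    next
      case False
      then show ?thesis using xy unfolding Pairs_def S_def by (intro UN_I[of "(y,x)"]) auto
    qed
  qed
  have "sum F {\<phi>\<in>PiE {1..m} (\<lambda>_. {1..n}). \<not> inj_on \<phi> {1..m}} \<le> sum F (\<Union>p\<in>Pairs. S p)"
    by (rule sum_mono2) (use sub finP Fpos in \<open>auto simp: S_def finite_PiE\<close>)
  also have "\<dots> \<le> (\<Sum>p\<in>Pairs. sum F (S p))"
    by (rule sum_UN_le_nonneg) (use finP Fpos in \<open>auto simp: S_def finite_PiE\<close>)
  also have "\<dots> \<le> (\<Sum>p\<in>Pairs. e * D^(m-1) * real n)"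
  proof (rule sum_mono)
    fix p assume "p \<in> Pairs"
    then show "sum F (S p) \<le> e * D^(m-1) * real n"
      unfolding S_def F_def Pairs_def
      by (intro noninj_pair_bound[OF m par Vpos Vle row col D]) auto
  qed
  also have "\<dots> = real (card Pairs) * (e * D^(m-1) * real n)" by simp
  also have "\<dots> \<le> real (m*m) * (e * D^(m-1) * real n)"
  proof (rule mult_right_mono)
    show "real (card Pairs) \<le> real (m*m)" using cardP by linarith
    have "e \<ge> 0" using Vpos[of 0 0] Vle[of 0 0] by simp
    then show "0 \<le> e * D^(m-1) * real n" using D by simp
  qed
  finally show ?thesis unfolding F_def .
qed


definition fo :: "nat list \<Rightarrow> nat \<Rightarrow> nat" where "fo c v = (LEAST s. c ! s = v)"
definition parent :: "nat list \<Rightarrow> nat \<Rightarrow> nat" where "parent c v = c ! (fo c v - 1)"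
definition Qe :: "nat list \<Rightarrow> nat \<Rightarrow> nat \<times> nat" where
  "Qe i s = (min (i ! (s - 1)) (i ! s), max (i ! (s - 1)) (i ! s))"

lemma Gamma_basic:
  assumes "c \<in> Gamma k t"
  shows "length c = Suc k" "c ! 0 = 1" "c ! k = 1" "set c = {1..t}" "t \<ge> 1"
    "\<And>s. s \<in> {1..k} \<Longrightarrow> c ! s \<le> Max ((\<lambda>r. c ! r) ` {0..<s}) + 1"
proof -
  show "length c = Suc k" "c ! 0 = 1" "c ! k = 1" "set c = {1..t}"
    "\<And>s. s \<in> {1..k} \<Longrightarrow> c ! s \<le> Max ((\<lambda>r. c ! r) ` {0..<s}) + 1"
    using assms unfolding Gamma_def closed_walk_def by auto
  then have "c ! 0 \<in> set c" by (intro nth_mem) simp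
  then have "1 \<in> set c" using \<open>c ! 0 = 1\<close> by simp
  then show "t \<ge> 1" using \<open>set c = {1..t}\<close> by auto
qed

lemma Gamma_below:
  assumes cG: "c \<in> Gamma k t"
  shows "s \<le> k \<Longrightarrow> 1 \<le> v \<Longrightarrow> v \<le> c ! s \<Longrightarrow> \<exists>r\<le>s. c ! r = v"
proof (induction s arbitrary: v rule: less_induct)
  case (less s)
  note G = Gamma_basic[OF cG]
  show ?case
  proof (cases "s = 0")
    case True
    then show ?thesis using less.prems G(2) by auto
  next
    case False
    define Mx where "Mx = Max ((\<lambda>r. c ! r) ` {0..<s})"
    have "Mx \<in> (\<lambda>r. c ! r) ` {0..<s}" unfolding Mx_def using False by (intro Max_in) auto
    then obtain r0 where r0: "r0 < s" "c ! r0 = Mx" by auto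
    have cs: "c ! s \<le> Mx + 1" unfolding Mx_def using G(6)[of s] False less.prems by auto
    show ?thesis
    proof (cases "v \<le> Mx")
      case True
      then obtain r where "r \<le> r0" "c ! r = v" using less.IH[of r0 v] r0 less.prems by auto
      then show ?thesis using r0 by (intro exI[of _ r]) auto
    next
      case False
      then have "v = c ! s" using cs less.prems by auto
      then show ?thesis by auto
    qed
  qed
qed

lemma fo_props:
  assumes cG: "c \<in> Gamma k t" and v: "v \<in> {1..t}"
  shows "fo c v \<le> k" "c ! fo c v = v" "\<And>r. r < fo c v \<Longrightarrow> c ! r \<noteq> v"
proof -
  note G = Gamma_basic[OF cG]
  have "v \<in> set c" using v G(4) by auto
  then obtain s where s: "s < length c" "c ! s = v" by (auto simp: in_set_conv_nth)
  show "c ! fo c v = v" unfolding fo_def using s(2) by (rule LeastI)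
  have "fo c v \<le> s" unfolding fo_def using s(2) by (rule Least_le)
  then show "fo c v \<le> k" using s G(1) by auto
  show "\<And>r. r < fo c v \<Longrightarrow> c ! r \<noteq> v" unfolding fo_def by (rule not_less_Least)
qed

lemma parent_props:
  assumes cG: "c \<in> Gamma k t" and v: "v \<in> {2..t}"
  shows "fo c v \<in> {1..k}" "1 \<le> parent c v" "parent c v < v" "parent c v \<in> {1..t}"
    "Qe c (fo c v) = (parent c v, v)"
proof -
  note G = Gamma_basic[OF cG]
  have v1: "v \<in> {1..t}" using v by auto
  note F = fo_props[OF cG v1]
  have "fo c v \<noteq> 0"
  proof
    assume "fo c v = 0"
    then have "v = 1" using F(2) G(2) by simp
    then show False using v by simp
  qed
  then show fk: "fo c v \<in> {1..k}" using F(1) by auto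
  have "parent c v \<in> set c" unfolding parent_def using fk G(1) by auto
  then show pt: "parent c v \<in> {1..t}" using G(4) by auto
  then show "1 \<le> parent c v" by auto
  show pv: "parent c v < v"
  proof (rule ccontr)
    assume "\<not> parent c v < v"
    then have "v \<le> c ! (fo c v - 1)" unfolding parent_def by auto
    then obtain r where "r \<le> fo c v - 1" "c ! r = v"
      using Gamma_below[OF cG, of "fo c v - 1" v] fk v by fastforce
    then have "r < fo c v" "c ! r = v" using fk by auto
    then show False using F(3) by blast
  qed
  show "Qe c (fo c v) = (parent c v, v)"
    unfolding Qe_def using pv F(2) by (simp add: parent_def)
qed


definition mlt :: "nat list \<Rightarrow> nat \<Rightarrow> nat \<times> nat \<Rightarrow> nat" where
  "mlt i k p = card {s \<in> {1..k}. Qe i s = p}"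

lemma minmax_eq_iff:
  fixes a b a' b' :: nat
  shows "((min a b, max a b) = (min a' b', max a' b')) \<longleftrightarrow> (a = a' \<and> b = b') \<or> (a = b' \<and> b = a')"
  by (auto simp: min_def max_def)

lemma Qe_eq_iff: "Qe i s = Qe i r \<longleftrightarrow> (i!(s-1) = i!(r-1) \<and> i!s = i!r) \<or> (i!(s-1) = i!r \<and> i!s = i!(r-1))"
  unfolding Qe_def by (rule minmax_eq_iff)

lemma Qe_iso:
  assumes "walk_iso i c" "length c = Suc k" "s \<in> {1..k}" "r \<in> {1..k}"
  shows "Qe i s = Qe i r \<longleftrightarrow> Qe c s = Qe c r"
proof -
  have "\<And>x y. x < Suc k \<Longrightarrow> y < Suc k \<Longrightarrow> (i!x = i!y) = (c!x = c!y)"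
    using assms(1,2) unfolding walk_iso_def by auto
  then show ?thesis unfolding Qe_eq_iff using assms(3,4) by auto
qed

lemma mlt_iso:
  assumes "walk_iso i c" "length c = Suc k" "s \<in> {1..k}"
  shows "mlt i k (Qe i s) = mlt c k (Qe c s)"
proof -
  have "{r \<in> {1..k}. Qe i r = Qe i s} = {r \<in> {1..k}. Qe c r = Qe c s}"
    using Qe_iso[OF assms(1,2) _ assms(3)] by auto
  then show ?thesis unfolding mlt_def by simp
qed

lemma mlt_ge2:
  assumes no_single: "\<forall>s\<in>{1..k}. \<exists>r\<in>{1..k}. r \<noteq> s \<and> {c ! (s - 1), c ! s} = {c ! (r - 1), c ! r}"
    and s: "s \<in> {1..k}"
  shows "mlt c k (Qe c s) \<ge> 2"
proof -
  obtain r where r: "r \<in> {1..k}" "r \<noteq> s" "{c ! (s - 1), c ! s} = {c ! (r - 1), c ! r}"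
    using no_single s by blast
  then have "Qe c r = Qe c s" unfolding Qe_eq_iff by (auto simp: doubleton_eq_iff)
  then have "{s, r} \<subseteq> {x \<in> {1..k}. Qe c x = Qe c s}" using r s by auto
  then have "card {s, r} \<le> mlt c k (Qe c s)" unfolding mlt_def by (intro card_mono) auto
  then show ?thesis using r by simp
qed

lemma mlt_sum: "(\<Sum>p\<in>Qe i ` {1..k}. mlt i k p) = k"
proof -
  have "(\<Sum>p\<in>Qe i ` {1..k}. \<Sum>s\<in>{s \<in> {1..k}. Qe i s = p}. (1::nat)) = (\<Sum>s\<in>{1..k}. 1)"
    by (rule sum.group) auto
  then show ?thesis unfolding mlt_def by simp
qed

lemma tree_inj:
  assumes cG: "c \<in> Gamma k t" and iso: "walk_iso i c"
  shows "inj_on (\<lambda>v. Qe i (fo c v)) {2..t}" "(\<lambda>v. Qe i (fo c v)) ` {2..t} \<subseteq> Qe i ` {1..k}"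
proof -
  note G = Gamma_basic[OF cG]
  show "inj_on (\<lambda>v. Qe i (fo c v)) {2..t}"
  proof (rule inj_onI)
    fix v w assume vw: "v \<in> {2..t}" "w \<in> {2..t}" "Qe i (fo c v) = Qe i (fo c w)"
    then have "Qe c (fo c v) = Qe c (fo c w)"
      using Qe_iso[OF iso G(1), of "fo c v" "fo c w"] parent_props[OF cG] by auto
    then show "v = w" using parent_props(5)[OF cG vw(1)] parent_props(5)[OF cG vw(2)] by simp
  qed
  show "(\<lambda>v. Qe i (fo c v)) ` {2..t} \<subseteq> Qe i ` {1..k}"
    using parent_props(1)[OF cG] by auto
qed

lemma card_edges:
  assumes cG: "c \<in> Gamma k t" and iso: "walk_iso i c"
    and no_single: "\<forall>s\<in>{1..k}. \<exists>r\<in>{1..k}. r \<noteq> s \<and> {c ! (s - 1), c ! s} = {c ! (r - 1), c ! r}"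
  shows "t - 1 \<le> card (Qe i ` {1..k})" "2 * card (Qe i ` {1..k}) \<le> k"
    "\<And>p. p \<in> Qe i ` {1..k} \<Longrightarrow> mlt i k p \<ge> 2"
proof -
  note G = Gamma_basic[OF cG]
  have "card ((\<lambda>v. Qe i (fo c v)) ` {2..t}) \<le> card (Qe i ` {1..k})"
    by (intro card_mono tree_inj[OF cG iso]) auto
  then show "t - 1 \<le> card (Qe i ` {1..k})"
    using card_image[OF tree_inj(1)[OF cG iso]] by simp
  show m2: "\<And>p. p \<in> Qe i ` {1..k} \<Longrightarrow> mlt i k p \<ge> 2"
    using mlt_iso[OF iso G(1)] mlt_ge2[OF no_single] by auto
  have "(\<Sum>p\<in>Qe i ` {1..k}. 2) \<le> (\<Sum>p\<in>Qe i ` {1..k}. mlt i k p)"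
    by (intro sum_mono m2)
  then show "2 * card (Qe i ` {1..k}) \<le> k" using mlt_sum[of i k] by (simp add: mult.commute)
qed


lemma telescope_int:
  fixes f :: "nat \<Rightarrow> int"
  shows "(\<Sum>s\<in>{1..k}. f (s - 1) - f s) = f 0 - f k"
proof (induction k)
  case 0
  then show ?case by simp
next
  case (Suc k)
  have "{1..Suc k} = insert (Suc k) {1..k}" by auto
  then show ?case using Suc by simp
qed

lemma tight_case:
  assumes cG: "c \<in> Gamma k t"
    and no_single: "\<forall>s\<in>{1..k}. \<exists>r\<in>{1..k}. r \<noteq> s \<and> {c ! (s - 1), c ! s} = {c ! (r - 1), c ! r}"
    and kt: "k = 2 * (t - 1)"
  shows "Qe c ` {1..k} = (\<lambda>v. Qe c (fo c v)) ` {2..t}"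
    "\<And>s. s \<in> {1..k} \<Longrightarrow> mlt c k (Qe c s) = 2"
proof -
  note G = Gamma_basic[OF cG]
  have iso: "walk_iso c c" unfolding walk_iso_def by auto
  note CE = card_edges[OF cG iso no_single]
  have sub: "(\<lambda>v. Qe c (fo c v)) ` {2..t} \<subseteq> Qe c ` {1..k}" by (rule tree_inj(2)[OF cG iso])
  have ct: "card ((\<lambda>v. Qe c (fo c v)) ` {2..t}) = t - 1"
    using card_image[OF tree_inj(1)[OF cG iso]] by simp
  have cP: "card (Qe c ` {1..k}) = t - 1" using CE(1,2) kt by linarith
  show "Qe c ` {1..k} = (\<lambda>v. Qe c (fo c v)) ` {2..t}"
    using card_subset_eq[OF _ sub] ct cP by auto
  have "(\<Sum>p\<in>Qe c ` {1..k}. mlt c k p - 2) = (\<Sum>p\<in>Qe c ` {1..k}. mlt c k p) - (\<Sum>p\<in>Qe c ` {1..k}. 2)"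
    by (rule sum_subtractf_nat) (use CE(3) in auto)
  also have "\<dots> = 0" using mlt_sum[of c k] cP kt by simp
  finally have "\<forall>p\<in>Qe c ` {1..k}. mlt c k p - 2 = 0" by simp
  then have z: "\<And>p. p \<in> Qe c ` {1..k} \<Longrightarrow> mlt c k p = 2" using CE(3) by (meson diff_is_0_eq le_antisym)
  then show "\<And>s. s \<in> {1..k} \<Longrightarrow> mlt c k (Qe c s) = 2" by blast
qed

lemma parent_one:
  assumes cG: "c \<in> Gamma k t"
  shows "parent c 1 = 1"
proof -
  note G = Gamma_basic[OF cG]
  have "fo c 1 \<le> 0" unfolding fo_def using G(2) by (intro Least_le) simp
  then show ?thesis unfolding parent_def using G(2) by simp
qed

lemma parent_iter:
  assumes cG: "c \<in> Gamma k t" and u: "u \<in> {1..t}"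
  shows "(parent c ^^ j) u \<in> {1..t} \<and> (parent c ^^ j) u \<le> u"
proof (induction j)
  case 0
  then show ?case using u by simp
next
  case (Suc j)
  define w where "w = (parent c ^^ j) u"
  have w: "w \<in> {1..t}" "w \<le> u" using Suc unfolding w_def by auto
  have "parent c w \<in> {1..t} \<and> parent c w \<le> w"
  proof (cases "w = 1")
    case True
    then show ?thesis using parent_one[OF cG] w by simp
  next
    case False
    then have "w \<in> {2..t}" using w by auto
    then show ?thesis using parent_props[OF cG] by fastforce
  qed
  then show ?case using w unfolding w_def by auto
qed

lemma tight_direction:
  assumes cG: "c \<in> Gamma k t"
    and no_single: "\<forall>s\<in>{1..k}. \<exists>r\<in>{1..k}. r \<noteq> s \<and> {c ! (s - 1), c ! s} = {c ! (r - 1), c ! r}"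
    and kt: "k = 2 * (t - 1)"
    and v: "v \<in> {2..t}" and r: "r \<in> {1..k}" "r \<noteq> fo c v" and rq: "Qe c r = Qe c (fo c v)"
  shows "c ! (r - 1) = v \<and> c ! r = parent c v"
proof -
  note G = Gamma_basic[OF cG]
  note T = tight_case[OF cG no_single kt]
  note PV = parent_props[OF cG v]
  define S where "S = {u. \<exists>j. (parent c ^^ j) u = v}"
  have vS: "v \<in> S" unfolding S_def by (auto intro: exI[of _ 0])
  have pvS: "parent c v \<notin> S"
  proof
    assume "parent c v \<in> S"
    then obtain j where "(parent c ^^ j) (parent c v) = v" unfolding S_def by auto
    moreover have "(parent c ^^ j) (parent c v) \<le> parent c v" using parent_iter[OF cG PV(4)] by auto
    ultimately show False using PV(3) by simp
  qed
  have Siff: "parent c u \<in> S \<longleftrightarrow> u \<in> S" if u: "u \<in> {2..t}" "u \<noteq> v" for u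
  proof
    assume "parent c u \<in> S"
    then obtain j where "(parent c ^^ j) (parent c u) = v" unfolding S_def by auto
    then have "(parent c ^^ Suc j) u = v" by (simp only: funpow_Suc_right comp_def)
    then show "u \<in> S" unfolding S_def by blast
  next
    assume "u \<in> S"
    then obtain j where j: "(parent c ^^ j) u = v" unfolding S_def by auto
    have "j \<noteq> 0"
    proof
      assume "j = 0" then show False using j u by simp
    qed
    then obtain j' where "j = Suc j'" by (cases j) auto
    then have "(parent c ^^ j') (parent c u) = v" using j by (simp only: funpow_Suc_right comp_def)
    then show "parent c u \<in> S" unfolding S_def by blast
  qed
  define g where "g s = (if c ! (s - 1) \<in> S then 1 else 0) - (if c ! s \<in> S then 1 else (0::int))" for s
  have sum0: "(\<Sum>s\<in>{1..k}. g s) = 0"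
    using telescope_int[of "\<lambda>s. if c ! s \<in> S then 1 else 0" k] G(2,3) unfolding g_def by simp
  have fov: "fo c v \<in> {1..k}" by (rule PV(1))
  have A: "{x \<in> {1..k}. Qe c x = Qe c (fo c v)} = {fo c v, r}"
  proof -
    have "{fo c v, r} \<subseteq> {x \<in> {1..k}. Qe c x = Qe c (fo c v)}" using fov r rq by auto
    moreover have "card {x \<in> {1..k}. Qe c x = Qe c (fo c v)} = 2" using T(2)[OF fov] unfolding mlt_def .
    moreover have "card {fo c v, r} = 2" using r by auto
    ultimately show ?thesis by (intro card_subset_eq[symmetric]) auto
  qed
  have zero: "g s = 0" if s: "s \<in> {1..k} - {fo c v, r}" for s
  proof -
    have "Qe c s \<in> (\<lambda>v. Qe c (fo c v)) ` {2..t}" using T(1) s by auto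
    then obtain u where u: "u \<in> {2..t}" "Qe c s = Qe c (fo c u)" by auto
    have "u \<noteq> v" using u(2) s A by auto
    have "Qe c s = (parent c u, u)" using u parent_props(5)[OF cG u(1)] by simp
    then have "(c ! (s-1) = parent c u \<and> c ! s = u) \<or> (c ! (s-1) = u \<and> c ! s = parent c u)"
      using parent_props(3)[OF cG u(1)] unfolding Qe_def by (auto simp: min_def max_def split: if_splits)
    then show ?thesis unfolding g_def using Siff[OF u(1) \<open>u \<noteq> v\<close>] by auto
  qed
  have "(\<Sum>s\<in>{1..k}. g s) = (\<Sum>s\<in>{fo c v, r}. g s)"
    by (rule sum.mono_neutral_right) (use fov r zero in auto)
  also have "\<dots> = g (fo c v) + g r" using r by simp
  finally have sum2: "g (fo c v) + g r = 0" using sum0 by simp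
  have "g (fo c v) = -1"
    unfolding g_def using pvS vS fo_props(2)[OF cG, of v] v by (simp add: parent_def)
  then have gr: "g r = 1" using sum2 by simp
  have "Qe c r = (parent c v, v)" using rq PV(5) by simp
  then have "(c ! (r-1) = parent c v \<and> c ! r = v) \<or> (c ! (r-1) = v \<and> c ! r = parent c v)"
    using PV(3) unfolding Qe_def by (auto simp: min_def max_def split: if_splits)
  then show ?thesis using gr pvS vS unfolding g_def by auto
qed


lemma cnj_meas[measurable]: "cnj \<in> borel_measurable borel"
  by (intro borel_measurable_continuous_onI continuous_intros)

locale wig =
  fixes M :: "'a measure" and Wn :: "nat \<Rightarrow> nat \<Rightarrow> 'a \<Rightarrow> complex" and n :: nat and e :: real
  assumes probM: "prob_space M"
    and herm: "\<And>i j x. i \<in> {1..n} \<Longrightarrow> j \<in> {1..n} \<Longrightarrow> x \<in> space M \<Longrightarrow> Wn j i x = cnj (Wn i j x)"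
    and indep: "prob_space.indep_vars M (\<lambda>_. borel) (\<lambda>p. Wn (fst p) (snd p)) {(i, j). 1 \<le> i \<and> i \<le> j \<and> j \<le> n}"
    and mean0: "\<And>i j. i \<in> {1..n} \<Longrightarrow> j \<in> {1..n} \<Longrightarrow> integral\<^sup>L M (Wn i j) = 0"
    and bdd: "\<And>i j x. i \<in> {1..n} \<Longrightarrow> j \<in> {1..n} \<Longrightarrow> x \<in> space M \<Longrightarrow> cmod (Wn i j x) \<le> e"
begin

sublocale P: prob_space M by (rule probM)

lemma meas_up: "a \<in> {1..n} \<Longrightarrow> b \<in> {1..n} \<Longrightarrow> a \<le> b \<Longrightarrow> Wn a b \<in> borel_measurable M"
proof -
  assume "a \<in> {1..n}" "b \<in> {1..n}" "a \<le> b"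
  then have "(a, b) \<in> {(i, j). 1 \<le> i \<and> i \<le> j \<and> j \<le> n}" by auto
  moreover have "\<forall>p\<in>{(i, j). 1 \<le> i \<and> i \<le> j \<and> j \<le> n}. Wn (fst p) (snd p) \<in> borel_measurable M"
    using indep unfolding P.indep_vars_def by (rule conjunct1)
  ultimately have "Wn (fst (a, b)) (snd (a, b)) \<in> borel_measurable M" by (rule bspec[rotated])
  then show ?thesis by simp
qed

lemma meas: assumes "a \<in> {1..n}" "b \<in> {1..n}" shows "Wn a b \<in> borel_measurable M"
proof (cases "a \<le> b")
  case True
  then show ?thesis using meas_up assms by auto
next
  case False
  have "Wn b a \<in> borel_measurable M" using meas_up[of b a] assms False by auto
  then have "(\<lambda>x. cnj (Wn b a x)) \<in> borel_measurable M" by (rule measurable_compose[OF _ cnj_meas])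
  moreover have "(Wn a b \<in> borel_measurable M) = ((\<lambda>x. cnj (Wn b a x)) \<in> borel_measurable M)"
    by (rule measurable_cong) (rule herm[of b a], use assms in auto)
  ultimately show ?thesis by (rule iffD2[rotated])
qed

lemma integrable_bdd:
  fixes f :: "'a \<Rightarrow> 'b::{banach, second_countable_topology}"
  assumes "f \<in> borel_measurable M" "\<And>x. x \<in> space M \<Longrightarrow> norm (f x) \<le> B"
  shows "integrable M f"
  by (rule P.integrable_const_bound[where B=B]) (use assms in auto)

lemma e_nonneg: "n \<ge> 1 \<Longrightarrow> e \<ge> 0"
proof -
  assume "n \<ge> 1"
  obtain x where "x \<in> space M" using P.not_empty by auto
  then have "cmod (Wn 1 1 x) \<le> e" using bdd[of 1 1 x] \<open>n \<ge> 1\<close> by simp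
  then show "e \<ge> 0" using norm_ge_zero[of "Wn 1 1 x"] by linarith
qed

lemma cvar_eq: assumes "a \<in> {1..n}" "b \<in> {1..n}"
  shows "cvar M (Wn a b) = integral\<^sup>L M (\<lambda>x. (cmod (Wn a b x))^2)"
  unfolding cvar_def using mean0[OF assms] by simp

lemma cvar_sym: assumes "a \<in> {1..n}" "b \<in> {1..n}"
  shows "cvar M (Wn a b) = cvar M (Wn b a)"
  unfolding cvar_eq[OF assms] cvar_eq[OF assms(2,1)]
proof (rule Bochner_Integration.integral_cong[OF refl])
  fix x assume "x \<in> space M"
  then have "Wn b a x = cnj (Wn a b x)" using herm assms by blast
  then show "(cmod (Wn a b x))\<^sup>2 = (cmod (Wn b a x))\<^sup>2" by simp
qed

lemma cvar_bounds: assumes "a \<in> {1..n}" "b \<in> {1..n}"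
  shows "cvar M (Wn a b) \<ge> 0" "cvar M (Wn a b) \<le> e^2"
proof -
  show "cvar M (Wn a b) \<ge> 0" unfolding cvar_def by simp
  have "integral\<^sup>L M (\<lambda>x. (cmod (Wn a b x))^2) \<le> integral\<^sup>L M (\<lambda>x. e^2)"
  proof (rule integral_mono)
    show "integrable M (\<lambda>x. (cmod (Wn a b x))^2)"
    proof (rule integrable_bdd[where B="e^2"])
      have "Wn a b \<in> borel_measurable M" by (rule meas[OF assms])
      moreover have "(\<lambda>z. (cmod z)^2) \<in> borel_measurable borel"
        by (intro borel_measurable_continuous_onI continuous_intros)
      ultimately show "(\<lambda>x. (cmod (Wn a b x))^2) \<in> borel_measurable M" by (rule measurable_compose)
      fix x assume "x \<in> space M"
      then have "cmod (Wn a b x) \<le> e" by (rule bdd[OF assms])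
      then show "norm ((cmod (Wn a b x))^2) \<le> e^2" by (simp add: power_mono)
    qed
    show "integrable M (\<lambda>x. e^2)" by simp
    show "\<And>x. x \<in> space M \<Longrightarrow> (cmod (Wn a b x))^2 \<le> e^2"
      using bdd[OF assms] by (auto intro!: power_mono)
  qed
  then show "cvar M (Wn a b) \<le> e^2" unfolding cvar_eq[OF assms] by (simp add: P.prob_space)
qed

definition dirf :: "nat list \<Rightarrow> nat \<Rightarrow> complex \<Rightarrow> complex" where
  "dirf i s z = (if i ! (s - 1) \<le> i ! s then z else cnj z)"

lemma W_dir:
  assumes "i ! (s - 1) \<in> {1..n}" "i ! s \<in> {1..n}" "x \<in> space M"
  shows "Wn (i ! (s - 1)) (i ! s) x = dirf i s (Wn (fst (Qe i s)) (snd (Qe i s)) x)"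
proof (cases "i ! (s - 1) \<le> i ! s")
  case True
  then show ?thesis unfolding dirf_def Qe_def by (simp add: min_def max_def)
next
  case False
  have h: "Wn (i ! (s - 1)) (i ! s) x = cnj (Wn (i ! s) (i ! (s - 1)) x)" by (rule herm[OF assms(2,1,3)])
  show ?thesis using False h unfolding dirf_def Qe_def by (simp add: min_def max_def)
qed

lemma factor:
  assumes len: "length i = Suc k" and si: "set i \<subseteq> {1..n}"
  shows "integral\<^sup>L M (\<lambda>x. \<Prod>s\<in>{1..k}. Wn (i ! (s - 1)) (i ! s) x) =
    (\<Prod>p\<in>Qe i ` {1..k}. integral\<^sup>L M (\<lambda>x. \<Prod>s\<in>{s \<in> {1..k}. Qe i s = p}. Wn (i ! (s - 1)) (i ! s) x))"
proof -
  have ii: "i ! (s - 1) \<in> {1..n}" "i ! s \<in> {1..n}" if "s \<in> {1..k}" for s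
  proof -
    have "i ! (s - 1) \<in> set i" "i ! s \<in> set i" using that len by (auto intro!: nth_mem)
    then show "i ! (s - 1) \<in> {1..n}" "i ! s \<in> {1..n}" using si by auto
  qed
  define P where "P = Qe i ` {1..k}"
  define h where "h p z = (\<Prod>s\<in>{s \<in> {1..k}. Qe i s = p}. dirf i s z)" for p z
  define Y where "Y p x = h p (Wn (fst p) (snd p) x)" for p x
  have PU: "P \<subseteq> {(i, j). 1 \<le> i \<and> i \<le> j \<and> j \<le> n}"
    unfolding P_def Qe_def using ii by auto
  have XY: "(\<Prod>s\<in>{s \<in> {1..k}. Qe i s = p}. Wn (i ! (s - 1)) (i ! s) x) = Y p x"
    if "p \<in> P" "x \<in> space M" for p x
    unfolding Y_def h_def
  proof (rule prod.cong[OF refl])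
    fix s assume "s \<in> {s \<in> {1..k}. Qe i s = p}"
    then have s: "s \<in> {1..k}" "Qe i s = p" by auto
    show "Wn (i ! (s - 1)) (i ! s) x = dirf i s (Wn (fst p) (snd p) x)"
      using W_dir[OF ii[OF s(1)] that(2)] s(2) by simp
  qed
  have hmeas: "h p \<in> borel_measurable borel" for p
    unfolding h_def dirf_def by (intro borel_measurable_prod) (auto split: if_splits)
  have indY: "P.indep_vars (\<lambda>_. borel) Y P"
    unfolding Y_def
    by (rule P.indep_vars_compose2[where X="\<lambda>p. Wn (fst p) (snd p)", OF P.indep_vars_subset[OF indep PU]])
       (rule hmeas)
  have Ymeas: "Y p \<in> borel_measurable M" if "p \<in> P" for p
  proof -
    have "\<forall>p\<in>P. Y p \<in> borel_measurable M" using indY unfolding P.indep_vars_def by (rule conjunct1)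
    then show ?thesis using that by blast
  qed
  have intY: "integrable M (Y p)" if "p \<in> P" for p
  proof (rule integrable_bdd[OF Ymeas[OF that], where B="e ^ card {s \<in> {1..k}. Qe i s = p}"])
    fix x assume x: "x \<in> space M"
    have "fst p \<in> {1..n}" "snd p \<in> {1..n}" using PU that by auto
    then have "cmod (Wn (fst p) (snd p) x) \<le> e" using bdd x by auto
    define A where "A = {s \<in> {1..k}. Qe i s = p}"
    have "cmod (Y p x) = (\<Prod>s\<in>A. cmod (dirf i s (Wn (fst p) (snd p) x)))"
      unfolding Y_def h_def A_def by (simp add: prod_norm)
    also have "\<dots> = (\<Prod>s\<in>A. cmod (Wn (fst p) (snd p) x))"
      by (intro prod.cong refl) (simp add: dirf_def)
    also have "\<dots> = cmod (Wn (fst p) (snd p) x) ^ card A" by simp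
    also have "\<dots> \<le> e ^ card A" by (rule power_mono) (use \<open>cmod (Wn (fst p) (snd p) x) \<le> e\<close> in auto)
    finally show "cmod (Y p x) \<le> e ^ card {s \<in> {1..k}. Qe i s = p}" unfolding A_def .
  qed
  have "integral\<^sup>L M (\<lambda>x. \<Prod>s\<in>{1..k}. Wn (i ! (s - 1)) (i ! s) x) =
      integral\<^sup>L M (\<lambda>x. \<Prod>p\<in>P. Y p x)"
  proof (rule Bochner_Integration.integral_cong[OF refl])
    fix x assume x: "x \<in> space M"
    have "(\<Prod>s\<in>{1..k}. Wn (i ! (s - 1)) (i ! s) x) =
        (\<Prod>p\<in>P. \<Prod>s\<in>{s \<in> {1..k}. Qe i s = p}. Wn (i ! (s - 1)) (i ! s) x)"
      unfolding P_def by (rule prod.group[symmetric]) auto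
    also have "\<dots> = (\<Prod>p\<in>P. Y p x)" by (intro prod.cong refl XY x)
    finally show "(\<Prod>s\<in>{1..k}. Wn (i ! (s - 1)) (i ! s) x) = (\<Prod>p\<in>P. Y p x)" .
  qed
  also have "\<dots> = (\<Prod>p\<in>P. integral\<^sup>L M (Y p))"
  proof (rule P.indep_vars_lebesgue_integral)
    show "finite P" unfolding P_def by simp
  qed (use indY intY in auto)
  also have "\<dots> = (\<Prod>p\<in>P. integral\<^sup>L M (\<lambda>x. \<Prod>s\<in>{s \<in> {1..k}. Qe i s = p}. Wn (i ! (s - 1)) (i ! s) x))"
  proof (rule prod.cong[OF refl])
    fix p assume "p \<in> P"
    then show "integral\<^sup>L M (Y p) = integral\<^sup>L M (\<lambda>x. \<Prod>s\<in>{s \<in> {1..k}. Qe i s = p}. Wn (i ! (s - 1)) (i ! s) x)"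
      using XY by (intro Bochner_Integration.integral_cong) auto
  qed
  finally show ?thesis by (simp only: P_def)
qed

end


context wig begin

lemma Xnorm:
  assumes len: "length i = Suc k" and si: "set i \<subseteq> {1..n}" and s0: "s0 \<in> {1..k}" and x: "x \<in> space M"
  shows "cmod (\<Prod>s\<in>{s \<in> {1..k}. Qe i s = Qe i s0}. Wn (i ! (s - 1)) (i ! s) x)
     = cmod (Wn (fst (Qe i s0)) (snd (Qe i s0)) x) ^ mlt i k (Qe i s0)"
proof -
  have ii: "i ! (s - 1) \<in> {1..n}" "i ! s \<in> {1..n}" if "s \<in> {1..k}" for s
  proof -
    have "i ! (s - 1) \<in> set i" "i ! s \<in> set i" using that len by (auto intro!: nth_mem)
    then show "i ! (s - 1) \<in> {1..n}" "i ! s \<in> {1..n}" using si by auto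
  qed
  have "cmod (\<Prod>s\<in>{s \<in> {1..k}. Qe i s = Qe i s0}. Wn (i ! (s - 1)) (i ! s) x)
      = (\<Prod>s\<in>{s \<in> {1..k}. Qe i s = Qe i s0}. cmod (Wn (i ! (s - 1)) (i ! s) x))"
    by (simp add: prod_norm)
  also have "\<dots> = (\<Prod>s\<in>{s \<in> {1..k}. Qe i s = Qe i s0}. cmod (Wn (fst (Qe i s0)) (snd (Qe i s0)) x))"
  proof (rule prod.cong[OF refl])
    fix s assume "s \<in> {s \<in> {1..k}. Qe i s = Qe i s0}"
    then have s: "s \<in> {1..k}" "Qe i s = Qe i s0" by auto
    show "cmod (Wn (i ! (s - 1)) (i ! s) x) = cmod (Wn (fst (Qe i s0)) (snd (Qe i s0)) x)"
      using W_dir[OF ii[OF s(1)] x] s(2) by (simp add: dirf_def)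
  qed
  also have "\<dots> = cmod (Wn (fst (Qe i s0)) (snd (Qe i s0)) x) ^ mlt i k (Qe i s0)"
    unfolding mlt_def by simp
  finally show ?thesis .
qed

lemma group_bound:
  assumes len: "length i = Suc k" and si: "set i \<subseteq> {1..n}" and s0: "s0 \<in> {1..k}"
  shows "cmod (integral\<^sup>L M (\<lambda>x. \<Prod>s\<in>{s \<in> {1..k}. Qe i s = Qe i s0}. Wn (i ! (s - 1)) (i ! s) x))
           \<le> e ^ mlt i k (Qe i s0)"
    "mlt i k (Qe i s0) \<ge> 2 \<Longrightarrow> cmod (integral\<^sup>L M (\<lambda>x. \<Prod>s\<in>{s \<in> {1..k}. Qe i s = Qe i s0}. Wn (i ! (s - 1)) (i ! s) x))
           \<le> e ^ (mlt i k (Qe i s0) - 2) * cvar M (Wn (fst (Qe i s0)) (snd (Qe i s0)))"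
proof -
  define m where "m = mlt i k (Qe i s0)"
  define a where "a = fst (Qe i s0)"
  define b where "b = snd (Qe i s0)"
  have ii: "i ! (s - 1) \<in> {1..n}" "i ! s \<in> {1..n}" if "s \<in> {1..k}" for s
  proof -
    have "i ! (s - 1) \<in> set i" "i ! s \<in> set i" using that len by (auto intro!: nth_mem)
    then show "i ! (s - 1) \<in> {1..n}" "i ! s \<in> {1..n}" using si by auto
  qed
  have ab: "a \<in> {1..n}" "b \<in> {1..n}" unfolding a_def b_def Qe_def using ii[OF s0] by (auto simp: min_def max_def)
  have n1: "n \<ge> 1" using ab by auto
  have e0: "e \<ge> 0" by (rule e_nonneg[OF n1])
  have wb: "\<And>x. x \<in> space M \<Longrightarrow> cmod (Wn a b x) \<le> e" using bdd ab by auto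
  have mp: "(\<lambda>x. cmod (Wn a b x) ^ j) \<in> borel_measurable M" for j
  proof -
    have "(\<lambda>z. cmod z ^ j) \<in> borel_measurable borel" by (intro borel_measurable_continuous_onI continuous_intros)
    with meas[OF ab] show ?thesis by (rule measurable_compose)
  qed
  have ip: "integrable M (\<lambda>x. cmod (Wn a b x) ^ j)" for j
    by (rule integrable_bdd[OF mp, where B="e^j"]) (use wb e0 in \<open>auto intro: power_mono\<close>)
  have "cmod (integral\<^sup>L M (\<lambda>x. \<Prod>s\<in>{s \<in> {1..k}. Qe i s = Qe i s0}. Wn (i ! (s - 1)) (i ! s) x))
     \<le> integral\<^sup>L M (\<lambda>x. cmod (\<Prod>s\<in>{s \<in> {1..k}. Qe i s = Qe i s0}. Wn (i ! (s - 1)) (i ! s) x))"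
    by (rule integral_norm_bound)
  also have "\<dots> = integral\<^sup>L M (\<lambda>x. cmod (Wn a b x) ^ m)"
    unfolding a_def b_def m_def
    by (rule Bochner_Integration.integral_cong[OF refl]) (rule Xnorm[OF len si s0])
  finally have base: "cmod (integral\<^sup>L M (\<lambda>x. \<Prod>s\<in>{s \<in> {1..k}. Qe i s = Qe i s0}. Wn (i ! (s - 1)) (i ! s) x))
     \<le> integral\<^sup>L M (\<lambda>x. cmod (Wn a b x) ^ m)" .
  have "integral\<^sup>L M (\<lambda>x. cmod (Wn a b x) ^ m) \<le> integral\<^sup>L M (\<lambda>x. e ^ m)"
    by (rule integral_mono[OF ip]) (use wb in \<open>auto intro: power_mono\<close>)
  then show "cmod (integral\<^sup>L M (\<lambda>x. \<Prod>s\<in>{s \<in> {1..k}. Qe i s = Qe i s0}. Wn (i ! (s - 1)) (i ! s) x))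
           \<le> e ^ mlt i k (Qe i s0)" using base unfolding m_def by (simp add: P.prob_space)
  assume m2: "mlt i k (Qe i s0) \<ge> 2"
  have "integral\<^sup>L M (\<lambda>x. cmod (Wn a b x) ^ m) \<le> integral\<^sup>L M (\<lambda>x. e ^ (m - 2) * cmod (Wn a b x) ^ 2)"
  proof (rule integral_mono[OF ip])
    show "integrable M (\<lambda>x. e ^ (m - 2) * cmod (Wn a b x) ^ 2)" using ip[of 2] by simp
    fix x assume x: "x \<in> space M"
    have "cmod (Wn a b x) ^ m = cmod (Wn a b x) ^ (m - 2) * cmod (Wn a b x) ^ 2"
    proof -
      have "m = (m - 2) + 2" using m2 unfolding m_def by simp
      then show ?thesis by (metis power_add)
    qed
    also have "\<dots> \<le> e ^ (m - 2) * cmod (Wn a b x) ^ 2"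
      by (intro mult_right_mono power_mono wb x) auto
    finally show "cmod (Wn a b x) ^ m \<le> e ^ (m - 2) * cmod (Wn a b x) ^ 2" .
  qed
  also have "\<dots> = e ^ (m - 2) * cvar M (Wn a b)"
    using cvar_eq[OF ab] by simp
  finally show "cmod (integral\<^sup>L M (\<lambda>x. \<Prod>s\<in>{s \<in> {1..k}. Qe i s = Qe i s0}. Wn (i ! (s - 1)) (i ! s) x))
           \<le> e ^ (mlt i k (Qe i s0) - 2) * cvar M (Wn (fst (Qe i s0)) (snd (Qe i s0)))"
    using base unfolding m_def a_def b_def by simp
qed

lemma group_exact:
  assumes len: "length i = Suc k" and si: "set i \<subseteq> {1..n}"
    and s12: "s1 \<in> {1..k}" "s2 \<in> {1..k}" "s1 \<noteq> s2"
    and grp: "{s \<in> {1..k}. Qe i s = Qe i s1} = {s1, s2}"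
    and dir: "i ! (s2 - 1) = i ! s1" "i ! s2 = i ! (s1 - 1)"
  shows "integral\<^sup>L M (\<lambda>x. \<Prod>s\<in>{s \<in> {1..k}. Qe i s = Qe i s1}. Wn (i ! (s - 1)) (i ! s) x)
    = complex_of_real (cvar M (Wn (i ! (s1 - 1)) (i ! s1)))"
proof -
  define a where "a = i ! (s1 - 1)"
  define b where "b = i ! s1"
  have ab: "a \<in> {1..n}" "b \<in> {1..n}"
  proof -
    have "i ! (s1 - 1) \<in> set i" "i ! s1 \<in> set i" using s12 len by (auto intro!: nth_mem)
    then show "a \<in> {1..n}" "b \<in> {1..n}" using si unfolding a_def b_def by auto
  qed
  have "integral\<^sup>L M (\<lambda>x. \<Prod>s\<in>{s \<in> {1..k}. Qe i s = Qe i s1}. Wn (i ! (s - 1)) (i ! s) x)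
      = integral\<^sup>L M (\<lambda>x. complex_of_real ((cmod (Wn a b x))^2))"
  proof (rule Bochner_Integration.integral_cong[OF refl])
    fix x assume x: "x \<in> space M"
    have h: "Wn b a x = cnj (Wn a b x)" by (rule herm[OF ab x])
    have "(\<Prod>s\<in>{s \<in> {1..k}. Qe i s = Qe i s1}. Wn (i ! (s - 1)) (i ! s) x) = Wn a b x * Wn b a x"
      unfolding grp using s12(3) dir unfolding a_def b_def by simp
    also have "\<dots> = complex_of_real ((cmod (Wn a b x))^2)"
      unfolding h using complex_norm_square[of "Wn a b x"] by simp
    finally show "(\<Prod>s\<in>{s \<in> {1..k}. Qe i s = Qe i s1}. Wn (i ! (s - 1)) (i ! s) x) = complex_of_real ((cmod (Wn a b x))^2)" .
  qed
  also have "\<dots> = complex_of_real (cvar M (Wn a b))"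
    by (simp only: cvar_eq[OF ab] integral_complex_of_real)
  finally show ?thesis unfolding a_def b_def .
qed

end


lemma map_walk:
  assumes cG: "c \<in> Gamma k t" and \<phi>: "\<phi> \<in> PiE {1..t} (\<lambda>_. {1..n::nat})" and inj: "inj_on \<phi> {1..t}"
  shows "length (map \<phi> c) = Suc k" "set (map \<phi> c) \<subseteq> {1..n}" "walk_iso (map \<phi> c) c"
    "closed_walk k (map \<phi> c)" "\<And>s. s \<le> k \<Longrightarrow> map \<phi> c ! s = \<phi> (c ! s)"
proof -
  note G = Gamma_basic[OF cG]
  show "length (map \<phi> c) = Suc k" using G(1) by simp
  show "set (map \<phi> c) \<subseteq> {1..n}"
  proof
    fix y assume "y \<in> set (map \<phi> c)"
    then obtain a where "a \<in> set c" "y = \<phi> a" by auto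
    then have "a \<in> {1..t}" "y = \<phi> a" using G(4) by auto
    then show "y \<in> {1..n}" using \<phi> by (auto simp: PiE_iff)
  qed
  show nth: "\<And>s. s \<le> k \<Longrightarrow> map \<phi> c ! s = \<phi> (c ! s)" using G(1) by simp
  show "walk_iso (map \<phi> c) c"
    unfolding walk_iso_def
  proof (intro conjI allI impI)
    fix s r assume "s < length (map \<phi> c)" "r < length (map \<phi> c)"
    then have sl: "s < length c" "r < length c" by simp_all
    have "c ! s \<in> set c" "c ! r \<in> set c" by (rule nth_mem[OF sl(1)], rule nth_mem[OF sl(2)])
    then have cs: "c ! s \<in> {1..t}" "c ! r \<in> {1..t}" using G(4) by blast+
    have eq: "map \<phi> c ! s = \<phi> (c ! s)" "map \<phi> c ! r = \<phi> (c ! r)" using sl by simp_all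
    show "(map \<phi> c ! s = map \<phi> c ! r) = (c ! s = c ! r)"
      unfolding eq by (rule inj_on_eq_iff[OF inj cs])
  qed simp
  show "closed_walk k (map \<phi> c)" unfolding closed_walk_def using G(1,2,3) by simp
qed

context wig begin

lemma tree_edge_val:
  assumes cG: "c \<in> Gamma k t" and \<phi>: "\<phi> \<in> PiE {1..t} (\<lambda>_. {1..n})" and inj: "inj_on \<phi> {1..t}"
    and v: "v \<in> {2..t}"
  shows "cvar M (Wn (fst (Qe (map \<phi> c) (fo c v))) (snd (Qe (map \<phi> c) (fo c v)))) = cvar M (Wn (\<phi> (parent c v)) (\<phi> v))"
    "map \<phi> c ! (fo c v - 1) = \<phi> (parent c v)" "map \<phi> c ! (fo c v) = \<phi> v"
proof -
  note PV = parent_props[OF cG v]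
  note MW = map_walk[OF cG \<phi> inj]
  have "fo c v - 1 \<le> k" using PV(1) by auto
  then show a: "map \<phi> c ! (fo c v - 1) = \<phi> (parent c v)" using MW(5)[of "fo c v - 1"] by (simp add: parent_def)
  show b: "map \<phi> c ! (fo c v) = \<phi> v" using MW(5)[of "fo c v"] PV(1) fo_props(2)[OF cG, of v] v by simp
  have ab: "\<phi> (parent c v) \<in> {1..n}" "\<phi> v \<in> {1..n}" using \<phi> PV(4) v by (auto simp: PiE_def Pi_def)
  show "cvar M (Wn (fst (Qe (map \<phi> c) (fo c v))) (snd (Qe (map \<phi> c) (fo c v)))) = cvar M (Wn (\<phi> (parent c v)) (\<phi> v))"
  proof (cases "\<phi> (parent c v) \<le> \<phi> v")
    case True
    then show ?thesis unfolding Qe_def a b by (simp add: min_def max_def)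
  next
    case False
    have cs: "cvar M (Wn (\<phi> v) (\<phi> (parent c v))) = cvar M (Wn (\<phi> (parent c v)) (\<phi> v))"
      by (rule cvar_sym[OF ab(2,1)])
    show ?thesis unfolding Qe_def a b using False cs by (simp add: min_def max_def)
  qed
qed

lemma walk_bound:
  assumes cG: "c \<in> Gamma k t"
    and no_single: "\<forall>s\<in>{1..k}. \<exists>r\<in>{1..k}. r \<noteq> s \<and> {c ! (s - 1), c ! s} = {c ! (r - 1), c ! r}"
    and \<phi>: "\<phi> \<in> PiE {1..t} (\<lambda>_. {1..n})" and inj: "inj_on \<phi> {1..t}" and epos: "e > 0"
  shows "cmod (integral\<^sup>L M (\<lambda>x. \<Prod>s\<in>{1..k}. Wn (map \<phi> c ! (s - 1)) (map \<phi> c ! s) x))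
    \<le> e ^ k / e ^ (2 * (t - 1)) * (\<Prod>v\<in>{2..t}. cvar M (Wn (\<phi> (parent c v)) (\<phi> v)))"
proof -
  define i where "i = map \<phi> c"
  note MW = map_walk[OF cG \<phi> inj, folded i_def]
  define P where "P = Qe i ` {1..k}"
  define T where "T = (\<lambda>v. Qe i (fo c v)) ` {2..t}"
  define G where "G p = integral\<^sup>L M (\<lambda>x. \<Prod>s\<in>{s \<in> {1..k}. Qe i s = p}. Wn (i ! (s - 1)) (i ! s) x)" for p
  define cv where "cv p = cvar M (Wn (fst p) (snd p))" for p
  have TP: "T \<subseteq> P" unfolding T_def P_def by (rule tree_inj(2)[OF cG MW(3)])
  have injT: "inj_on (\<lambda>v. Qe i (fo c v)) {2..t}" by (rule tree_inj(1)[OF cG MW(3)])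
  note CE = card_edges[OF cG MW(3) no_single]
  have E: "integral\<^sup>L M (\<lambda>x. \<Prod>s\<in>{1..k}. Wn (i ! (s - 1)) (i ! s) x) = (\<Prod>p\<in>P. G p)"
    unfolding P_def G_def by (rule factor[OF MW(1,2)])
  define b where "b p = e ^ mlt i k p * (if p \<in> T then cv p / e^2 else 1)" for p
  have Gb: "cmod (G p) \<le> b p" if pP: "p \<in> P" for p
  proof -
    obtain s0 where s0: "s0 \<in> {1..k}" "p = Qe i s0" using pP unfolding P_def by auto
    note GB = group_bound[OF MW(1,2) s0(1)]
    show ?thesis
    proof (cases "p \<in> T")
      case True
      have m2: "mlt i k p \<ge> 2" using CE(3) pP unfolding P_def by auto
      have "cmod (G p) \<le> e ^ (mlt i k p - 2) * cv p"
        using GB(2) m2 unfolding G_def cv_def s0(2) by simp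
      also have "\<dots> = b p"
      proof -
        have "mlt i k p = (mlt i k p - 2) + 2" using m2 by simp
        then have "e ^ mlt i k p = e ^ (mlt i k p - 2) * e ^ 2"
          by (metis power_add)
        then show ?thesis unfolding b_def using True epos by (simp add: field_simps)
      qed
      finally show ?thesis .
    next
      case False
      then show ?thesis using GB(1) unfolding G_def b_def s0(2) by simp
    qed
  qed
  have "cmod (\<Prod>p\<in>P. G p) = (\<Prod>p\<in>P. cmod (G p))" by (simp add: prod_norm)
  also have "\<dots> \<le> (\<Prod>p\<in>P. b p)" by (intro prod_mono) (simp add: Gb)
  also have "(\<Prod>p\<in>P. b p) = (\<Prod>p\<in>P. e ^ mlt i k p) * (\<Prod>p\<in>P. (if p \<in> T then cv p / e^2 else 1))"
    unfolding b_def by (rule prod.distrib)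
  also have "(\<Prod>p\<in>P. e ^ mlt i k p) = e ^ k"
    unfolding P_def power_sum[symmetric] mlt_sum ..
  also have "(\<Prod>p\<in>P. (if p \<in> T then cv p / e^2 else 1)) = (\<Prod>p\<in>T. cv p / e^2)"
  proof -
    have "finite P" unfolding P_def by simp
    then have "(\<Prod>p\<in>P. (if p \<in> T then cv p / e^2 else 1)) = (\<Prod>p\<in>P \<inter> T. cv p / e^2)" by (rule prod.inter_restrict[symmetric])
    also have "P \<inter> T = T" using TP by auto
    finally show ?thesis .
  qed
  also have "\<dots> = (\<Prod>v\<in>{2..t}. cv (Qe i (fo c v)) / e^2)"
    unfolding T_def by (rule prod.reindex[OF injT, unfolded comp_def])
  also have "\<dots> = (\<Prod>v\<in>{2..t}. cvar M (Wn (\<phi> (parent c v)) (\<phi> v))) / e ^ (2 * (t - 1))"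
  proof -
    have "(\<Prod>v\<in>{2..t}. cv (Qe i (fo c v)) / e^2) = (\<Prod>v\<in>{2..t}. cvar M (Wn (\<phi> (parent c v)) (\<phi> v)) / e^2)"
      unfolding cv_def i_def by (intro prod.cong refl) (simp add: tree_edge_val(1)[OF cG \<phi> inj])
    also have "\<dots> = (\<Prod>v\<in>{2..t}. cvar M (Wn (\<phi> (parent c v)) (\<phi> v))) / (e^2) ^ (t - 1)"
      by (simp add: prod_dividef)
    finally show ?thesis by (simp add: power_mult)
  qed
  finally have fin: "cmod (\<Prod>p\<in>P. G p) \<le> e ^ k * ((\<Prod>v\<in>{2..t}. cvar M (Wn (\<phi> (parent c v)) (\<phi> v))) / e ^ (2 * (t - 1)))" .
  have "e ^ k * ((\<Prod>v\<in>{2..t}. cvar M (Wn (\<phi> (parent c v)) (\<phi> v))) / e ^ (2 * (t - 1)))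
     = e ^ k / e ^ (2 * (t - 1)) * (\<Prod>v\<in>{2..t}. cvar M (Wn (\<phi> (parent c v)) (\<phi> v)))" by simp
  with fin show ?thesis using E unfolding i_def by simp
qed

end


context wig begin

lemma walk_exact:
  assumes cG: "c \<in> Gamma k t"
    and no_single: "\<forall>s\<in>{1..k}. \<exists>r\<in>{1..k}. r \<noteq> s \<and> {c ! (s - 1), c ! s} = {c ! (r - 1), c ! r}"
    and kt: "k = 2 * (t - 1)"
    and \<phi>: "\<phi> \<in> PiE {1..t} (\<lambda>_. {1..n})" and inj: "inj_on \<phi> {1..t}"
  shows "integral\<^sup>L M (\<lambda>x. \<Prod>s\<in>{1..k}. Wn (map \<phi> c ! (s - 1)) (map \<phi> c ! s) x)
    = complex_of_real (\<Prod>v\<in>{2..t}. cvar M (Wn (\<phi> (parent c v)) (\<phi> v)))"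
proof -
  define i where "i = map \<phi> c"
  note MW = map_walk[OF cG \<phi> inj, folded i_def]
  note G = Gamma_basic[OF cG]
  note TC = tight_case[OF cG no_single kt]
  define P where "P = Qe i ` {1..k}"
  define G where "G p = integral\<^sup>L M (\<lambda>x. \<Prod>s\<in>{s \<in> {1..k}. Qe i s = p}. Wn (i ! (s - 1)) (i ! s) x)" for p
  have injT: "inj_on (\<lambda>v. Qe i (fo c v)) {2..t}" by (rule tree_inj(1)[OF cG MW(3)])
  have E: "integral\<^sup>L M (\<lambda>x. \<Prod>s\<in>{1..k}. Wn (i ! (s - 1)) (i ! s) x) = (\<Prod>p\<in>P. G p)"
    unfolding P_def G_def by (rule factor[OF MW(1,2)])
  have PT: "P = (\<lambda>v. Qe i (fo c v)) ` {2..t}"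
  proof
    show "(\<lambda>v. Qe i (fo c v)) ` {2..t} \<subseteq> P" unfolding P_def by (rule tree_inj(2)[OF cG MW(3)])
    show "P \<subseteq> (\<lambda>v. Qe i (fo c v)) ` {2..t}"
    proof
      fix p assume "p \<in> P"
      then obtain s where s: "s \<in> {1..k}" "p = Qe i s" unfolding P_def by auto
      then have "Qe c s \<in> (\<lambda>v. Qe c (fo c v)) ` {2..t}" using TC(1) by blast
      then obtain v where v: "v \<in> {2..t}" "Qe c s = Qe c (fo c v)" by auto
      then have "Qe i s = Qe i (fo c v)"
        using Qe_iso[OF MW(3) G(1) s(1) parent_props(1)[OF cG v(1)]] by simp
      then show "p \<in> (\<lambda>v. Qe i (fo c v)) ` {2..t}" using s v by auto
    qed
  qed
  have Gv: "G (Qe i (fo c v)) = complex_of_real (cvar M (Wn (\<phi> (parent c v)) (\<phi> v)))" if v: "v \<in> {2..t}" for v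
  proof -
    define s1 where "s1 = fo c v"
    have s1: "s1 \<in> {1..k}" unfolding s1_def by (rule parent_props(1)[OF cG v])
    define A where "A = {s \<in> {1..k}. Qe i s = Qe i s1}"
    have A': "A = {s \<in> {1..k}. Qe c s = Qe c s1}"
      unfolding A_def using Qe_iso[OF MW(3) G(1) _ s1] by auto
    have cA: "card A = 2" using TC(2)[OF s1] unfolding A' mlt_def .
    have s1A: "s1 \<in> A" using s1 unfolding A_def by auto
    have "card (A - {s1}) = 1" using cA s1A by (simp add: card_Diff_singleton)
    then obtain s2 where "A - {s1} = {s2}" by (auto simp: card_Suc_eq)
    then have s2: "s2 \<in> A" "s2 \<noteq> s1" by auto
    have As: "A = {s1, s2}"
    proof -
      have "{s1, s2} \<subseteq> A" using s1A s2 by auto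
      moreover have "card {s1, s2} = card A" using cA s2 by simp
      moreover have "finite A" unfolding A_def by simp
      ultimately show ?thesis by (intro card_subset_eq[symmetric]) auto
    qed
    have s2k: "s2 \<in> {1..k}" and q2: "Qe c s2 = Qe c s1" using s2 unfolding A' by auto
    have dir: "c ! (s2 - 1) = v \<and> c ! s2 = parent c v"
      by (rule tight_direction[OF cG no_single kt v s2k]) (use s2 q2 s1_def in auto)
    have s2le: "s2 - 1 \<le> k" "s2 \<le> k" using s2k by auto
    have d1: "i ! (s2 - 1) = i ! s1"
      using MW(5)[OF s2le(1)] dir tree_edge_val(3)[OF cG \<phi> inj v] unfolding i_def s1_def by simp
    have d2: "i ! s2 = i ! (s1 - 1)"
      using MW(5)[OF s2le(2)] dir tree_edge_val(2)[OF cG \<phi> inj v] unfolding i_def s1_def by simp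
    have "G (Qe i s1) = complex_of_real (cvar M (Wn (i ! (s1 - 1)) (i ! s1)))"
      unfolding G_def by (rule group_exact[OF MW(1,2) s1 s2k s2(2)[symmetric] As[unfolded A_def] d1 d2])
    then show ?thesis
      using tree_edge_val(2,3)[OF cG \<phi> inj v] unfolding s1_def i_def by simp
  qed
  have "(\<Prod>p\<in>P. G p) = (\<Prod>v\<in>{2..t}. G (Qe i (fo c v)))"
    unfolding PT by (rule prod.reindex[OF injT, unfolded comp_def])
  also have "\<dots> = (\<Prod>v\<in>{2..t}. complex_of_real (cvar M (Wn (\<phi> (parent c v)) (\<phi> v))))"
    by (intro prod.cong refl Gv)
  also have "\<dots> = complex_of_real (\<Prod>v\<in>{2..t}. cvar M (Wn (\<phi> (parent c v)) (\<phi> v)))"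
    by (rule of_real_prod[symmetric])
  finally show ?thesis using E unfolding i_def by simp
qed

end


lemma Lwalks_reindex:
  assumes cG: "c \<in> Gamma k t"
  shows "Lwalks n k c = (\<lambda>\<phi>. map \<phi> c) ` {\<phi> \<in> PiE {1..t} (\<lambda>_. {1..n}). inj_on \<phi> {1..t}}"
    "inj_on (\<lambda>\<phi>. map \<phi> c) {\<phi> \<in> PiE {1..t} (\<lambda>_. {1..n}). inj_on \<phi> {1..t}}"
proof -
  note G = Gamma_basic[OF cG]
  show "Lwalks n k c = (\<lambda>\<phi>. map \<phi> c) ` {\<phi> \<in> PiE {1..t} (\<lambda>_. {1..n}). inj_on \<phi> {1..t}}"
  proof
    show "(\<lambda>\<phi>. map \<phi> c) ` {\<phi> \<in> PiE {1..t} (\<lambda>_. {1..n}). inj_on \<phi> {1..t}} \<subseteq> Lwalks n k c"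
    proof
      fix i assume "i \<in> (\<lambda>\<phi>. map \<phi> c) ` {\<phi> \<in> PiE {1..t} (\<lambda>_. {1..n}). inj_on \<phi> {1..t}}"
      then obtain \<phi> where \<phi>: "\<phi> \<in> PiE {1..t} (\<lambda>_. {1..n})" "inj_on \<phi> {1..t}" "i = map \<phi> c" by auto
      note MW = map_walk[OF cG \<phi>(1,2)]
      show "i \<in> Lwalks n k c" unfolding Lwalks_def \<phi>(3) using MW(2,3,4) by auto
    qed
    show "Lwalks n k c \<subseteq> (\<lambda>\<phi>. map \<phi> c) ` {\<phi> \<in> PiE {1..t} (\<lambda>_. {1..n}). inj_on \<phi> {1..t}}"
    proof
      fix i assume "i \<in> Lwalks n k c"
      then have cw: "closed_walk k i" and si: "set i \<subseteq> {1..n}" and iso: "walk_iso i c"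
        unfolding Lwalks_def by auto
      have len: "length i = Suc k" using cw unfolding closed_walk_def by auto
      have isoI: "(i ! x = i ! y) = (c ! x = c ! y)" if "x < Suc k" "y < Suc k" for x y
        using iso that len unfolding walk_iso_def by auto
      define \<phi> where "\<phi> = restrict (\<lambda>v. i ! fo c v) {1..t}"
      have fo: "fo c v < Suc k" "c ! fo c v = v" if "v \<in> {1..t}" for v
        using fo_props[OF cG that] by auto
      have \<phi>P: "\<phi> \<in> PiE {1..t} (\<lambda>_. {1..n})"
        unfolding \<phi>_def
      proof (rule restrict_PiE_iff[THEN iffD2], intro ballI)
        fix v assume "v \<in> {1..t}"
        then have "i ! fo c v \<in> set i" using fo len by (intro nth_mem) auto
        then show "i ! fo c v \<in> {1..n}" using si by auto
      qed
      have \<phi>I: "inj_on \<phi> {1..t}"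
      proof (rule inj_onI)
        fix u v assume uv: "u \<in> {1..t}" "v \<in> {1..t}" "\<phi> u = \<phi> v"
        then have "i ! fo c u = i ! fo c v" unfolding \<phi>_def by simp
        then have "c ! fo c u = c ! fo c v" using isoI[OF fo(1)[OF uv(1)] fo(1)[OF uv(2)]] by simp
        then show "u = v" using fo(2)[OF uv(1)] fo(2)[OF uv(2)] by simp
      qed
      have "map \<phi> c = i"
      proof (rule nth_equalityI)
        show "length (map \<phi> c) = length i" using len G(1) by simp
        fix s assume "s < length (map \<phi> c)"
        then have s: "s < Suc k" using G(1) by simp
        then have cs: "c ! s \<in> {1..t}" using G(1,4) by (metis nth_mem)
        have "map \<phi> c ! s = i ! fo c (c ! s)" using s cs G(1) unfolding \<phi>_def by simp
        also have "\<dots> = i ! s" using isoI[OF fo(1)[OF cs] s] fo(2)[OF cs] by simp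
        finally show "map \<phi> c ! s = i ! s" .
      qed
      then show "i \<in> (\<lambda>\<phi>. map \<phi> c) ` {\<phi> \<in> PiE {1..t} (\<lambda>_. {1..n}). inj_on \<phi> {1..t}}"
        using \<phi>P \<phi>I by auto
    qed
  qed
  show "inj_on (\<lambda>\<phi>. map \<phi> c) {\<phi> \<in> PiE {1..t} (\<lambda>_. {1..n}). inj_on \<phi> {1..t}}"
  proof (rule inj_onI)
    fix \<phi> \<psi> assume "\<phi> \<in> {\<phi> \<in> PiE {1..t} (\<lambda>_. {1..n}). inj_on \<phi> {1..t}}"
      "\<psi> \<in> {\<phi> \<in> PiE {1..t} (\<lambda>_. {1..n}). inj_on \<phi> {1..t}}" and eq: "map \<phi> c = map \<psi> c"
    then have P: "\<phi> \<in> PiE {1..t} (\<lambda>_. {1..n})" "\<psi> \<in> PiE {1..t} (\<lambda>_. {1..n})" by auto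
    have "\<forall>a\<in>set c. \<phi> a = \<psi> a" using eq by (simp add: map_eq_conv)
    then have "\<And>a. a \<in> {1..t} \<Longrightarrow> \<phi> a = \<psi> a" using G(4) by auto
    then show "\<phi> = \<psi>" using P by (intro PiE_ext) auto
  qed
qed


theorem lemma4p2:
  fixes M :: "nat \<Rightarrow> 'a measure"
    and W :: "nat \<Rightarrow> nat \<Rightarrow> nat \<Rightarrow> 'a \<Rightarrow> complex"
    and \<eta> :: "nat \<Rightarrow> real"
    and C :: real
    and k t :: nat
    and c :: "nat list"
  assumes prob: "\<And>n. prob_space (M n)"
    and herm: "\<And>n i j x. i \<in> {1..n} \<Longrightarrow> j \<in> {1..n} \<Longrightarrow> x \<in> space (M n) \<Longrightarrow>
                  W n j i x = cnj (W n i j x)"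
    and indep: "\<And>n. prob_space.indep_vars (M n) (\<lambda>_. borel) (\<lambda>p. W n (fst p) (snd p))
                   {(i, j). 1 \<le> i \<and> i \<le> j \<and> j \<le> n}"
    and mean0: "\<And>n i j. i \<in> {1..n} \<Longrightarrow> j \<in> {1..n} \<Longrightarrow> integral\<^sup>L (M n) (W n i j) = 0"
    and eta_pos: "\<And>n. \<eta> n > 0"
    and eta_lim: "\<eta> \<longlonglongrightarrow> 0"
    and bdd: "\<And>n i j x. i \<in> {1..n} \<Longrightarrow> j \<in> {1..n} \<Longrightarrow> x \<in> space (M n) \<Longrightarrow>
                  cmod (W n i j x) \<le> \<eta> n"
    and C_nonneg: "C \<ge> 0"
    and var_bdd: "\<And>n i. i \<in> {1..n} \<Longrightarrow> (\<Sum>j=1..n. cvar (M n) (W n i j)) \<le> C"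
    and var_lim: "(\<lambda>n. (1 / real n) * (\<Sum>i=1..n. \<bar>\<Sum>j=1..n. (cvar (M n) (W n i j) - 1 / real n)\<bar>))
                    \<longlonglongrightarrow> 0"
    and cG: "c \<in> Gamma k t"
    and no_single: "\<forall>s\<in>{1..k}. \<exists>r\<in>{1..k}. r \<noteq> s \<and>
                      {c ! (s - 1), c ! s} = {c ! (r - 1), c ! r}"
  shows "real t \<le> real k / 2 + 1 \<and>
    (real t < real k / 2 + 1 \<longrightarrow>
       (\<lambda>n. (1 / of_nat n) * (\<Sum>i\<in>Lwalks n k c.
           integral\<^sup>L (M n) (\<lambda>x. \<Prod>s\<in>{1..k}. W n (i ! (s - 1)) (i ! s) x))) \<longlonglongrightarrow> (0::complex)) \<and>
    (real t = real k / 2 + 1 \<longrightarrow>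
       (\<lambda>n. (1 / of_nat n) * (\<Sum>i\<in>Lwalks n k c.
           integral\<^sup>L (M n) (\<lambda>x. \<Prod>s\<in>{1..k}. W n (i ! (s - 1)) (i ! s) x))) \<longlonglongrightarrow> (1::complex))"
proof -
  note G = Gamma_basic[OF cG]
  have wigI: "wig (M n) (W n) n (\<eta> n)" for n
  proof (rule wig.intro)
    show "prob_space (M n)" by (rule prob)
    show "\<And>i j x. i \<in> {1..n} \<Longrightarrow> j \<in> {1..n} \<Longrightarrow> x \<in> space (M n) \<Longrightarrow> W n j i x = cnj (W n i j x)"
      by (rule herm)
    show "prob_space.indep_vars (M n) (\<lambda>_. borel) (\<lambda>p. W n (fst p) (snd p)) {(i, j). 1 \<le> i \<and> i \<le> j \<and> j \<le> n}"
      by (rule indep)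
    show "\<And>i j. i \<in> {1..n} \<Longrightarrow> j \<in> {1..n} \<Longrightarrow> integral\<^sup>L (M n) (W n i j) = 0" by (rule mean0)
    show "\<And>i j x. i \<in> {1..n} \<Longrightarrow> j \<in> {1..n} \<Longrightarrow> x \<in> space (M n) \<Longrightarrow> cmod (W n i j x) \<le> \<eta> n"
      by (rule bdd)
  qed
  have isoc: "walk_iso c c" unfolding walk_iso_def by auto
  have tk: "2 * (t - 1) \<le> k"
    using card_edges(1,2)[OF cG isoc no_single] by linarith
  have part1: "real t \<le> real k / 2 + 1" using tk G(5) by linarith
  define par where "par = parent c"
  have par: "\<And>v. v \<in> {2..t} \<Longrightarrow> 1 \<le> par v \<and> par v < v"
    unfolding par_def using parent_props[OF cG] by auto
  define V where "V n x y = (if x \<in> {1..n} \<and> y \<in> {1..n} then cvar (M n) (W n x y) else 0)" for n x y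
  have Vpos: "V n x y \<ge> 0" for n x y
    unfolding V_def using wig.cvar_bounds(1)[OF wigI] by auto
  have Vle: "V n x y \<le> (\<eta> n)^2" for n x y
    unfolding V_def using wig.cvar_bounds(2)[OF wigI] by auto
  have Vsym: "V n x y = V n y x" for n x y
  proof (cases "x \<in> {1..n} \<and> y \<in> {1..n}")
    case True
    then have "cvar (M n) (W n x y) = cvar (M n) (W n y x)" using wig.cvar_sym[OF wigI, of x n y] by blast
    then show ?thesis unfolding V_def using True by simp
  next
    case False
    then show ?thesis unfolding V_def by auto
  qed
  have row: "(\<Sum>y=1..n. V n x y) \<le> C" if "x \<in> {1..n}" for n x
  proof -
    have "(\<Sum>y=1..n. V n x y) = (\<Sum>y=1..n. cvar (M n) (W n x y))"
      using that unfolding V_def by (intro sum.cong) auto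
    then show ?thesis using var_bdd[OF that] by simp
  qed
  have col: "(\<Sum>x=1..n. V n x y) \<le> C" if "y \<in> {1..n}" for n y
    using row[OF that] by (simp add: Vsym)
  define Inj where "Inj n = {\<phi> \<in> PiE {1..t} (\<lambda>_. {1..n}). inj_on \<phi> {1..t}}" for n :: nat
  define S where "S n = (\<Sum>i\<in>Lwalks n k c. integral\<^sup>L (M n) (\<lambda>x. \<Prod>s\<in>{1..k}. W n (i ! (s - 1)) (i ! s) x))" for n
  have Sre: "S n = (\<Sum>\<phi>\<in>Inj n. integral\<^sup>L (M n) (\<lambda>x. \<Prod>s\<in>{1..k}. W n (map \<phi> c ! (s - 1)) (map \<phi> c ! s) x))" for n
    unfolding S_def Inj_def Lwalks_reindex(1)[OF cG] by (subst sum.reindex[OF Lwalks_reindex(2)[OF cG]]) simp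
  have PV: "(\<Prod>v\<in>{2..t}. V n (\<phi> (par v)) (\<phi> v)) = (\<Prod>v\<in>{2..t}. cvar (M n) (W n (\<phi> (parent c v)) (\<phi> v)))"
    if "\<phi> \<in> PiE {1..t} (\<lambda>_. {1..n})" for n \<phi>
  proof (rule prod.cong[OF refl])
    fix v assume v: "v \<in> {2..t}"
    then have "par v \<in> {1..t}" "v \<in> {1..t}" using par[OF v] by auto
    then have "\<phi> (par v) \<in> {1..n}" "\<phi> v \<in> {1..n}" using that by (auto simp: PiE_iff)
    then show "V n (\<phi> (par v)) (\<phi> v) = cvar (M n) (W n (\<phi> (parent c v)) (\<phi> v))"
      unfolding V_def par_def by simp
  qed
  have finI: "finite (Inj n)" for n unfolding Inj_def by (rule finite_subset[of _ "PiE {1..t} (\<lambda>_. {1..n})"]) (auto simp: finite_PiE)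
  have ProdPos: "(\<Prod>v\<in>{2..t}. V n (\<phi> (par v)) (\<phi> v)) \<ge> 0" for n \<phi> by (intro prod_nonneg) (simp add: Vpos)
  have treeb: "(\<Sum>\<phi>\<in>PiE {1..t} (\<lambda>_. {1..n}). (\<Prod>v\<in>{2..t}. V n (\<phi> (par v)) (\<phi> v))) \<le> C^(t-1) * real n" for n
    using tree_sum_bound[OF G(5) par, where K="\<lambda>_. V n" and n=n and D=C and g="\<lambda>_. 1" and u=1]
      Vpos row col C_nonneg G(5) by simp
  have caseI: "(\<lambda>n. (1 / of_nat n) * S n) \<longlonglongrightarrow> (0::complex)" if lt: "real t < real k / 2 + 1"
  proof -
    define d where "d = k - 2 * (t - 1)"
    have d1: "d \<ge> 1" unfolding d_def using lt G(5) by linarith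
    have bnd: "norm ((1 / of_nat n) * S n) \<le> C^(t-1) * \<eta> n ^ d" if n1: "n \<ge> 1" for n
    proof -
      have ed: "\<eta> n ^ k / \<eta> n ^ (2 * (t - 1)) = \<eta> n ^ d"
        unfolding d_def using eta_pos[of n] tk by (simp add: power_diff)
      have "norm (S n) \<le> (\<Sum>\<phi>\<in>Inj n. cmod (integral\<^sup>L (M n) (\<lambda>x. \<Prod>s\<in>{1..k}. W n (map \<phi> c ! (s - 1)) (map \<phi> c ! s) x)))"
        unfolding Sre by (rule norm_sum)
      also have "\<dots> \<le> (\<Sum>\<phi>\<in>Inj n. \<eta> n ^ d * (\<Prod>v\<in>{2..t}. V n (\<phi> (par v)) (\<phi> v)))"
      proof (rule sum_mono)
        fix \<phi> assume "\<phi> \<in> Inj n"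
        then have \<phi>: "\<phi> \<in> PiE {1..t} (\<lambda>_. {1..n})" "inj_on \<phi> {1..t}" unfolding Inj_def by auto
        show "cmod (integral\<^sup>L (M n) (\<lambda>x. \<Prod>s\<in>{1..k}. W n (map \<phi> c ! (s - 1)) (map \<phi> c ! s) x))
            \<le> \<eta> n ^ d * (\<Prod>v\<in>{2..t}. V n (\<phi> (par v)) (\<phi> v))"
          using wig.walk_bound[OF wigI cG no_single \<phi> eta_pos] unfolding PV[OF \<phi>(1)] ed .
      qed
      also have "\<dots> \<le> (\<Sum>\<phi>\<in>PiE {1..t} (\<lambda>_. {1..n}). \<eta> n ^ d * (\<Prod>v\<in>{2..t}. V n (\<phi> (par v)) (\<phi> v)))"
        by (rule sum_mono2) (use eta_pos[of n] ProdPos in \<open>auto simp: Inj_def finite_PiE\<close>)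
      also have "\<dots> = \<eta> n ^ d * (\<Sum>\<phi>\<in>PiE {1..t} (\<lambda>_. {1..n}). (\<Prod>v\<in>{2..t}. V n (\<phi> (par v)) (\<phi> v)))"
        by (simp add: sum_distrib_left)
      also have "\<dots> \<le> \<eta> n ^ d * (C^(t-1) * real n)"
        by (rule mult_left_mono[OF treeb]) (use eta_pos[of n] in simp)
      finally have "norm (S n) \<le> \<eta> n ^ d * (C^(t-1) * real n)" .
      then have "norm (S n) / real n \<le> C^(t-1) * \<eta> n ^ d"
        using n1 by (simp add: divide_le_eq mult_ac)
      then show ?thesis by (simp add: norm_mult norm_divide)
    qed
    show ?thesis
    proof (rule Lim_null_comparison)
      show "\<forall>\<^sub>F n in sequentially. norm ((1 / of_nat n) * S n) \<le> C^(t-1) * \<eta> n ^ d"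
        using bnd by (intro eventually_sequentiallyI[of 1]) auto
      have "(\<lambda>n. C^(t-1) * \<eta> n ^ d) \<longlonglongrightarrow> C^(t-1) * 0 ^ d"
        by (intro tendsto_intros eta_lim)
      moreover have "(0::real) ^ d = 0" using d1 by simp
      ultimately show "(\<lambda>n. C^(t-1) * \<eta> n ^ d) \<longlonglongrightarrow> 0" by simp
    qed
  qed
  have caseII: "(\<lambda>n. (1 / of_nat n) * S n) \<longlonglongrightarrow> (1::complex)" if eq: "real t = real k / 2 + 1"
  proof -
    have kt: "k = 2 * (t - 1)" using eq G(5) by linarith
    define A where "A n = (\<Sum>\<phi>\<in>PiE {1..t} (\<lambda>_. {1..n}). (\<Prod>v\<in>{2..t}. V n (\<phi> (par v)) (\<phi> v)))" for n
    define B where "B n = (\<Sum>\<phi>\<in>{\<phi>\<in>PiE {1..t} (\<lambda>_. {1..n}). \<not> inj_on \<phi> {1..t}}. (\<Prod>v\<in>{2..t}. V n (\<phi> (par v)) (\<phi> v)))" for n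
    have SAB: "S n = complex_of_real (A n - B n)" for n
    proof -
      have "S n = (\<Sum>\<phi>\<in>Inj n. complex_of_real (\<Prod>v\<in>{2..t}. V n (\<phi> (par v)) (\<phi> v)))"
        unfolding Sre
      proof (rule sum.cong[OF refl])
        fix \<phi> assume "\<phi> \<in> Inj n"
        then have \<phi>: "\<phi> \<in> PiE {1..t} (\<lambda>_. {1..n})" "inj_on \<phi> {1..t}" unfolding Inj_def by auto
        show "integral\<^sup>L (M n) (\<lambda>x. \<Prod>s\<in>{1..k}. W n (map \<phi> c ! (s - 1)) (map \<phi> c ! s) x)
            = complex_of_real (\<Prod>v\<in>{2..t}. V n (\<phi> (par v)) (\<phi> v))"
          unfolding PV[OF \<phi>(1)] by (rule wig.walk_exact[OF wigI cG no_single kt \<phi>])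
      qed
      also have "\<dots> = complex_of_real (\<Sum>\<phi>\<in>Inj n. (\<Prod>v\<in>{2..t}. V n (\<phi> (par v)) (\<phi> v)))"
        by (rule of_real_sum[symmetric])
      also have "(\<Sum>\<phi>\<in>Inj n. (\<Prod>v\<in>{2..t}. V n (\<phi> (par v)) (\<phi> v))) = A n - B n"
      proof -
        have "PiE {1..t} (\<lambda>_. {1..n}) = Inj n \<union> {\<phi>\<in>PiE {1..t} (\<lambda>_. {1..n}). \<not> inj_on \<phi> {1..t}}"
          unfolding Inj_def by auto
        then have "A n = (\<Sum>\<phi>\<in>Inj n \<union> {\<phi>\<in>PiE {1..t} (\<lambda>_. {1..n}). \<not> inj_on \<phi> {1..t}}. (\<Prod>v\<in>{2..t}. V n (\<phi> (par v)) (\<phi> v)))"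
          unfolding A_def by simp
        also have "\<dots> = (\<Sum>\<phi>\<in>Inj n. (\<Prod>v\<in>{2..t}. V n (\<phi> (par v)) (\<phi> v))) + B n"
          unfolding B_def
          by (rule sum.union_disjoint) (auto simp: finI Inj_def finite_PiE)
        finally have "A n = (\<Sum>\<phi>\<in>Inj n. (\<Prod>v\<in>{2..t}. V n (\<phi> (par v)) (\<phi> v))) + B n" .
        then show ?thesis by simp
      qed
      finally show ?thesis .
    qed
    have lim': "(\<lambda>n. (1 / real n) * (\<Sum>x=1..n. \<bar>(\<Sum>y=1..n. V n x y) - 1\<bar>)) \<longlonglongrightarrow> 0"
    proof -
      have "(\<Sum>x=1..n. \<bar>(\<Sum>y=1..n. V n x y) - 1\<bar>) = (\<Sum>i=1..n. \<bar>\<Sum>j=1..n. (cvar (M n) (W n i j) - 1 / real n)\<bar>)" for n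
      proof (rule sum.cong[OF refl])
        fix x assume x: "x \<in> {1..n}"
        then have n1: "n \<ge> 1" by auto
        have "(\<Sum>j=1..n. (cvar (M n) (W n x j) - 1 / real n)) = (\<Sum>j=1..n. cvar (M n) (W n x j)) - real n * (1 / real n)"
          by (simp add: sum_subtractf)
        also have "\<dots> = (\<Sum>y=1..n. V n x y) - 1"
          using n1 x unfolding V_def by simp
        finally show "\<bar>(\<Sum>y=1..n. V n x y) - 1\<bar> = \<bar>\<Sum>j=1..n. (cvar (M n) (W n x j) - 1 / real n)\<bar>" by simp
      qed
      then show ?thesis using var_lim by simp
    qed
    have limA: "(\<lambda>n. (1 / real n) * A n) \<longlonglongrightarrow> 1"
      unfolding A_def by (rule tree_sum_lim[OF G(5) par Vpos row col C_nonneg lim'])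
    define D where "D = max C 1"
    have D1: "D \<ge> 1" unfolding D_def by simp
    have limB: "(\<lambda>n. (1 / real n) * B n) \<longlonglongrightarrow> 0"
    proof (rule Lim_null_comparison)
      show "\<forall>\<^sub>F n in sequentially. norm ((1 / real n) * B n) \<le> real (t * t) * D^(t-1) * (\<eta> n)^2"
      proof (intro eventually_sequentiallyI[of 1])
        fix n :: nat assume n1: "n \<ge> 1"
        have B0: "B n \<ge> 0" unfolding B_def by (intro sum_nonneg ProdPos)
        have "B n \<le> real (t * t) * ((\<eta> n)^2 * D^(t-1) * real n)"
          unfolding B_def
        proof (rule noninj_bound[OF G(5) par Vpos Vle _ _ D1])
          show "(\<Sum>y=1..n. V n x y) \<le> D" if "x \<in> {1..n}" for x
            using row[OF that] unfolding D_def by linarith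
          show "(\<Sum>x=1..n. V n x y) \<le> D" if "y \<in> {1..n}" for y
            using col[OF that] unfolding D_def by linarith
        qed
        then have "B n / real n \<le> real (t * t) * D^(t-1) * (\<eta> n)^2"
          using n1 by (simp add: divide_le_eq mult_ac)
        then show "norm ((1 / real n) * B n) \<le> real (t * t) * D^(t-1) * (\<eta> n)^2"
          using B0 by simp
      qed
      have "(\<lambda>n. real (t * t) * D^(t-1) * (\<eta> n)^2) \<longlonglongrightarrow> real (t * t) * D^(t-1) * 0^2"
        by (intro tendsto_intros eta_lim)
      then show "(\<lambda>n. real (t * t) * D^(t-1) * (\<eta> n)^2) \<longlonglongrightarrow> 0" by simp
    qed
    have "(\<lambda>n. (1 / real n) * A n - (1 / real n) * B n) \<longlonglongrightarrow> 1 - 0"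
      by (rule tendsto_diff[OF limA limB])
    then have "(\<lambda>n. complex_of_real ((1 / real n) * A n - (1 / real n) * B n)) \<longlonglongrightarrow> complex_of_real (1 - 0)"
      by (rule tendsto_of_real)
    moreover have "(1 / of_nat n) * S n = complex_of_real ((1 / real n) * A n - (1 / real n) * B n)" for n
      unfolding SAB by (simp add: algebra_simps)
    ultimately show ?thesis by simp
  qed
  show ?thesis
    using part1 caseI caseII unfolding S_def by blast
qed


end
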